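(* Let $\mathcal{S}$ be a finite set of road segments and $y_1,\dots,y_N$ (collectively $y_{[N]}$) the routes of $N$ historical trips, each a nonempty set of distinct segments. For each $n$ and $s\in y_n$ one observes $T'_{n,s}=\theta_s+\varepsilon_{n,s}$, where the $\theta_s$ are i.i.d. with mean $\mu$ and variance $\tau^2>0$, independent of the errors; for each $n$ the errors $(\varepsilon_{n,s})_{s\in y_n}$ have mean $0$ and covariances $\sigma_{s,t}$; errors from different trips are independent. Fix a route $y\subseteq\mathcal{S}$. (1) Given a partition $\mathscr{S}_y$ of $y$ into super-segments, with $N_S=|\{n:S\subseteq y_n\}|\ge1$ for each $S\in\mathscr{S}_y$, the generalized segment-based estimator $$\hat\Theta_y=\sum_{S\in\mathscr{S}_y}\Big[(1-\phi_S)|S|\mu+\phi_S\frac{\sum_{n:S\subseteq y_n}\sum_{s\in S}T'_{n,s}}{N_S}\Big]$$ has minimal integrated risk over all real weights $(\phi_S)_{S\in\mathscr{S}_y}$ exactly when $(\phi_S)=(\phi^\ast_S)$, where $(\phi^\ast_S)_{S\in\mathscr{S}_y}$ is the unique solution of the linear system $$\sum_{T\in\mathscr{S}_y}\frac{N_{S\cup T}}{N_SN_T}\phi^\ast_T\Big(\sum_{s\in S,t\in T}\sigma_{s,t}\Big)+(\phi^\ast_S-1)|S|\tau^2=0,\qquad S\in\mathscr{S}_y.$$ (2) Given a neighborhood $\delta(y)$ (a set of historical routes) with notation $M_{\delta(y)}$, $N^{\delta(y)}_s$, $\mathcal{S}_{\delta(y)}$, $\bar y_{\delta(y)}$ as below,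 the route-based estimator with weight $\phi$, $$(1-\phi)|y|\mu+\phi\frac{\sum_{n:y_n\in\delta(y)}\sum_{s\in y_n}T'_{n,s}}{M_{\delta(y)}},$$ has minimal integrated risk over all real $\phi$ when $\phi=\phi^\ast_{\delta(y)}(M_{\delta(y)})$ with $$\phi^\ast_{\delta(y)}(M_{\delta(y)})=\frac{\big(\sum_{s\in y}N^{\delta(y)}_s\big)\tau^2}{\sum_{s\in\mathcal{S}_{\delta(y)}}\frac{(N^{\delta(y)}_s)^2}{M_{\delta(y)}}\tau^2+\frac{\sum_{n:y_n\in\delta(y)}\sum_{s,t\in y_n}\sigma_{s,t}}{M_{\delta(y)}}+M_{\delta(y)}\mu^2(\bar y_{\delta(y)}-|y|)^2}.$$
   Context: The integrated risk of an estimator $\hat\Theta_y$ is $\mathbb{E}[(\hat\Theta_y-\sum_{s\in y}\theta_s)^2\mid y_{[N]}]$, expectation over errors and prior of $\theta$, conditional on the historical routes. $N_{S\cup T}=|\{n:S\cup T\subseteq y_n\}|$. $M_{\delta(y)}=\sum_n\mathbf 1\{y_n\in\delta(y)\}$, $N^{\delta(y)}_s=|\{n:y_n\in\delta(y),s\in y_n\}|$, $\mathcal{S}_{\delta(y)}=\bigcup_{y'\in\delta(y)}y'$, $\bar y_{\delta(y)}=\sum_{n:y_n\in\delta(y)}|y_n|/M_{\delta(y)}$. No distributional assumption beyond means and covariances is imposed. *)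

theory Defs
  imports "HOL-Probability.Probability" "HOL-Library.Disjoint_Sets"
begin

(* Historical routes: yr n for n < N (trips indexed 0..N-1). *)

definition Tobs :: "('a \<Rightarrow> 'w \<Rightarrow> real) \<Rightarrow> (nat \<Rightarrow> 'a \<Rightarrow> 'w \<Rightarrow> real) \<Rightarrow> nat \<Rightarrow> 'a \<Rightarrow> 'w \<Rightarrow> real" where
  "Tobs \<theta> \<epsilon> n s \<omega> = \<theta> s \<omega> + \<epsilon> n s \<omega>"

definition Ncnt :: "(nat \<Rightarrow> 'a set) \<Rightarrow> nat \<Rightarrow> 'a set \<Rightarrow> nat" where
  "Ncnt yr N S = card {n. n < N \<and> S \<subseteq> yr n}"

definition int_risk :: "'w measure \<Rightarrow> ('w \<Rightarrow> real) \<Rightarrow> ('a \<Rightarrow> 'w \<Rightarrow> real) \<Rightarrow> 'a set \<Rightarrow> real" where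
  "int_risk M est \<theta> y = (\<integral>\<omega>. (est \<omega> - (\<Sum>s\<in>y. \<theta> s \<omega>))^2 \<partial>M)"

definition seg_est :: "(nat \<Rightarrow> 'a set) \<Rightarrow> nat \<Rightarrow> ('a \<Rightarrow> 'w \<Rightarrow> real) \<Rightarrow> (nat \<Rightarrow> 'a \<Rightarrow> 'w \<Rightarrow> real)
    \<Rightarrow> real \<Rightarrow> 'a set set \<Rightarrow> ('a set \<Rightarrow> real) \<Rightarrow> 'w \<Rightarrow> real" where
  "seg_est yr N \<theta> \<epsilon> \<mu> P \<phi> \<omega> =
     (\<Sum>S\<in>P. (1 - \<phi> S) * real (card S) * \<mu>
        + \<phi> S * (\<Sum>n\<in>{n. n < N \<and> S \<subseteq> yr n}. \<Sum>s\<in>S. Tobs \<theta> \<epsilon> n s \<omega>) / real (Ncnt yr N S))"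

definition seg_system :: "(nat \<Rightarrow> 'a set) \<Rightarrow> nat \<Rightarrow> ('a \<Rightarrow> 'a \<Rightarrow> real) \<Rightarrow> real \<Rightarrow> 'a set set
    \<Rightarrow> ('a set \<Rightarrow> real) \<Rightarrow> bool" where
  "seg_system yr N \<sigma> \<tau> P \<phi> \<longleftrightarrow>
     (\<forall>S\<in>P. (\<Sum>T\<in>P. real (Ncnt yr N (S \<union> T)) / (real (Ncnt yr N S) * real (Ncnt yr N T))
                 * \<phi> T * (\<Sum>s\<in>S. \<Sum>t\<in>T. \<sigma> s t))
             + (\<phi> S - 1) * real (card S) * \<tau>^2 = 0)"

definition Mcnt :: "(nat \<Rightarrow> 'a set) \<Rightarrow> nat \<Rightarrow> 'a set set \<Rightarrow> nat" where
  "Mcnt yr N \<delta> = card {n. n < N \<and> yr n \<in> \<delta>}"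

definition Ndelta :: "(nat \<Rightarrow> 'a set) \<Rightarrow> nat \<Rightarrow> 'a set set \<Rightarrow> 'a \<Rightarrow> nat" where
  "Ndelta yr N \<delta> s = card {n. n < N \<and> yr n \<in> \<delta> \<and> s \<in> yr n}"

definition ybar :: "(nat \<Rightarrow> 'a set) \<Rightarrow> nat \<Rightarrow> 'a set set \<Rightarrow> real" where
  "ybar yr N \<delta> = (\<Sum>n\<in>{n. n < N \<and> yr n \<in> \<delta>}. real (card (yr n))) / real (Mcnt yr N \<delta>)"

definition route_est :: "(nat \<Rightarrow> 'a set) \<Rightarrow> nat \<Rightarrow> ('a \<Rightarrow> 'w \<Rightarrow> real) \<Rightarrow> (nat \<Rightarrow> 'a \<Rightarrow> 'w \<Rightarrow> real)
    \<Rightarrow> real \<Rightarrow> 'a set set \<Rightarrow> 'a set \<Rightarrow> real \<Rightarrow> 'w \<Rightarrow> real" where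
  "route_est yr N \<theta> \<epsilon> \<mu> \<delta> y \<phi> \<omega> =
     (1 - \<phi>) * real (card y) * \<mu>
     + \<phi> * (\<Sum>n\<in>{n. n < N \<and> yr n \<in> \<delta>}. \<Sum>s\<in>yr n. Tobs \<theta> \<epsilon> n s \<omega>) / real (Mcnt yr N \<delta>)"

definition phi_route :: "(nat \<Rightarrow> 'a set) \<Rightarrow> nat \<Rightarrow> ('a \<Rightarrow> 'a \<Rightarrow> real) \<Rightarrow> real \<Rightarrow> real
    \<Rightarrow> 'a set set \<Rightarrow> 'a set \<Rightarrow> real" where
  "phi_route yr N \<sigma> \<mu> \<tau> \<delta> y =
     (let M = real (Mcnt yr N \<delta>) in
      (\<Sum>s\<in>y. real (Ndelta yr N \<delta> s)) * \<tau>^2 /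
      ((\<Sum>s\<in>\<Union>\<delta>. real (Ndelta yr N \<delta> s)^2 / M) * \<tau>^2
       + (\<Sum>n\<in>{n. n < N \<and> yr n \<in> \<delta>}. \<Sum>s\<in>yr n. \<Sum>t\<in>yr n. \<sigma> s t) / M
       + M * \<mu>^2 * (ybar yr N \<delta> - real (card y))^2))"

end

theory Submission
  imports Defs
begin


lemma (in prob_space) indep_set_mono':
  assumes "indep_set A B" "A' \<subseteq> A" "B' \<subseteq> B"
  shows "indep_set A' B'"
  using assms indep_setD[OF assms(1)] indep_setD_ev1[OF assms(1)] indep_setD_ev2[OF assms(1)]
  by (intro indep_setI) auto

lemma (in prob_space) indep_var_from_set:
  assumes "random_variable borel X" "random_variable borel Y"
  and "indep_set {X -` A \<inter> space M | A. A \<in> sets borel} {Y -` A \<inter> space M | A. A \<in> sets borel}"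
  shows "indep_var borel X borel Y"
proof -
  have e: "(\<lambda>i. {case_bool X Y i -` A \<inter> space M |A. A \<in> sets (case_bool borel borel i)})
     = case_bool {X -` A \<inter> space M | A. A \<in> sets borel} {Y -` A \<inter> space M | A. A \<in> sets borel}"
    by (rule ext) (simp split: bool.split)
  show ?thesis
    unfolding indep_var_def indep_vars_def2 e using assms
    by (auto simp: indep_set_def split: bool.split)
qed

lemma (in prob_space) indep_vars_pair:
  assumes ind: "indep_vars M' X I" and ij: "i \<in> I" "j \<in> I" "i \<noteq> j"
  shows "indep_var (M' i) (X i) (M' j) (X j)"
proof -
  have "indep_var (PiM {i} M') (\<lambda>\<omega>. restrict (\<lambda>k. X k \<omega>) {i})
                  (PiM {j} M') (\<lambda>\<omega>. restrict (\<lambda>k. X k \<omega>) {j})"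
    using ij by (intro indep_var_restrict[OF ind]) auto
  then have "indep_var (M' i) ((\<lambda>f. f i) \<circ> (\<lambda>\<omega>. restrict (\<lambda>k. X k \<omega>) {i}))
                  (M' j) ((\<lambda>f. f j) \<circ> (\<lambda>\<omega>. restrict (\<lambda>k. X k \<omega>) {j}))"
    by (rule indep_var_compose) (auto intro!: measurable_component_singleton)
  moreover have "(\<lambda>f. f i) \<circ> (\<lambda>\<omega>. restrict (\<lambda>k. X k \<omega>) {i}) = X i"
    "(\<lambda>f. f j) \<circ> (\<lambda>\<omega>. restrict (\<lambda>k. X k \<omega>) {j}) = X j" by (auto simp: fun_eq_iff)
  ultimately show ?thesis by simp
qed

definition L2 :: "'w measure \<Rightarrow> ('w \<Rightarrow> real) \<Rightarrow> bool" where
  "L2 M f \<longleftrightarrow> f \<in> borel_measurable M \<and> integrable M (\<lambda>\<omega>. (f \<omega>)^2)"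

lemma abs_prod_le: "\<bar>(a::real) * b\<bar> \<le> a\<^sup>2 + b\<^sup>2"
proof -
  have "0 \<le> (\<bar>a\<bar> - \<bar>b\<bar>)\<^sup>2" by simp
  then have "2 * (\<bar>a\<bar> * \<bar>b\<bar>) \<le> a\<^sup>2 + b\<^sup>2" by (simp add: power2_diff)
  moreover have "0 \<le> \<bar>a\<bar> * \<bar>b\<bar>" by simp
  ultimately show ?thesis unfolding abs_mult by linarith
qed

lemma L2_mult_int:
  assumes "L2 M f" "L2 M g" shows "integrable M (\<lambda>\<omega>. f \<omega> * g \<omega>)"
proof -
  have m: "f \<in> borel_measurable M" "g \<in> borel_measurable M"
    and i: "integrable M (\<lambda>\<omega>. (f \<omega>)^2 + (g \<omega>)^2)" using assms by (auto simp: L2_def)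
  show ?thesis
  proof (rule Bochner_Integration.integrable_bound[OF i])
    show "(\<lambda>\<omega>. f \<omega> * g \<omega>) \<in> borel_measurable M" using m by measurable
    show "AE x in M. norm (f x * g x) \<le> norm ((f x)\<^sup>2 + (g x)\<^sup>2)"
    proof (rule AE_I2)
      fix x
      have "\<bar>f x * g x\<bar> \<le> (f x)\<^sup>2 + (g x)\<^sup>2"
        by (rule abs_prod_le)
      then show "norm (f x * g x) \<le> norm ((f x)\<^sup>2 + (g x)\<^sup>2)" by simp
    qed
  qed
qed

lemma L2_add: "L2 M f \<Longrightarrow> L2 M g \<Longrightarrow> L2 M (\<lambda>\<omega>. f \<omega> + g \<omega>)"
  unfolding L2_def power2_sum
  by (auto intro!: Bochner_Integration.integrable_add integrable_mult_right L2_mult_int[unfolded L2_def])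

lemma L2_scale: "L2 M f \<Longrightarrow> L2 M (\<lambda>\<omega>. c * f \<omega>)"
  unfolding L2_def power_mult_distrib by (auto intro!: integrable_mult_right)

lemma L2_sum: "(\<And>i. i \<in> I \<Longrightarrow> L2 M (f i)) \<Longrightarrow> L2 M (\<lambda>\<omega>. \<Sum>i\<in>I. f i \<omega>)"
proof (induction I rule: infinite_finite_induct)
  case (infinite A) then show ?case by (simp add: L2_def)
next
  case empty then show ?case by (simp add: L2_def)
next
  case (insert x F) then show ?case by (simp add: L2_add)
qed

lemma (in prob_space) L2_const: "L2 M (\<lambda>_. c)"
  by (simp add: L2_def)

lemma (in prob_space) L2_int: "L2 M f \<Longrightarrow> integrable M f"
  unfolding L2_def by (auto intro: square_integrable_imp_integrable)

locale rsetup = prob_space M for M :: "'w measure" +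
  fixes Sg :: "'a set" and N :: nat and yr :: "nat \<Rightarrow> 'a set"
    and \<theta> :: "'a \<Rightarrow> 'w \<Rightarrow> real" and \<epsilon> :: "nat \<Rightarrow> 'a \<Rightarrow> 'w \<Rightarrow> real"
    and \<mu> \<tau> :: real and \<sigma> :: "'a \<Rightarrow> 'a \<Rightarrow> real"
  assumes finSg: "finite Sg"
    and routes: "\<And>n. n < N \<Longrightarrow> yr n \<noteq> {} \<and> yr n \<subseteq> Sg"
    and th_meas: "\<And>s. s \<in> Sg \<Longrightarrow> \<theta> s \<in> borel_measurable M"
    and th_sq: "\<And>s. s \<in> Sg \<Longrightarrow> integrable M (\<lambda>\<omega>. (\<theta> s \<omega>)^2)"
    and th_indep: "indep_vars (\<lambda>_. (borel :: real measure)) \<theta> Sg"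
    and th_mean: "\<And>s. s \<in> Sg \<Longrightarrow> (\<integral>\<omega>. \<theta> s \<omega> \<partial>M) = \<mu>"
    and th_var: "\<And>s. s \<in> Sg \<Longrightarrow> (\<integral>\<omega>. (\<theta> s \<omega> - \<mu>)^2 \<partial>M) = \<tau>^2"
    and eps_meas: "\<And>n s. n < N \<Longrightarrow> s \<in> yr n \<Longrightarrow> \<epsilon> n s \<in> borel_measurable M"
    and eps_sq: "\<And>n s. n < N \<Longrightarrow> s \<in> yr n \<Longrightarrow> integrable M (\<lambda>\<omega>. (\<epsilon> n s \<omega>)^2)"
    and eps_mean: "\<And>n s. n < N \<Longrightarrow> s \<in> yr n \<Longrightarrow> (\<integral>\<omega>. \<epsilon> n s \<omega> \<partial>M) = 0"
    and eps_cov: "\<And>n s t. n < N \<Longrightarrow> s \<in> yr n \<Longrightarrow> t \<in> yr n \<Longrightarrow>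
                      (\<integral>\<omega>. \<epsilon> n s \<omega> * \<epsilon> n t \<omega> \<partial>M) = \<sigma> s t"
    and eps_indep: "indep_vars (\<lambda>n. PiM (yr n) (\<lambda>_. (borel :: real measure)))
                      (\<lambda>n \<omega>. restrict (\<lambda>s. \<epsilon> n s \<omega>) (yr n)) {..<N}"
    and th_eps_indep: "indep_set
                      {(\<lambda>\<omega>. restrict (\<lambda>s. \<theta> s \<omega>) Sg) -` A \<inter> space M
                         | A. A \<in> sets (PiM Sg (\<lambda>_. (borel :: real measure)))}
                      {(\<lambda>\<omega>. restrict (\<lambda>(n, s). \<epsilon> n s \<omega>) (SIGMA n:{..<N}. yr n)) -` B \<inter> space M
                         | B. B \<in> sets (PiM (SIGMA n:{..<N}. yr n) (\<lambda>_. (borel :: real measure)))}"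
begin

definition u :: "'a \<Rightarrow> 'w \<Rightarrow> real" where "u s \<omega> = \<theta> s \<omega> - \<mu>"

lemma L2_th: "s \<in> Sg \<Longrightarrow> L2 M (\<theta> s)"
  using th_meas th_sq by (simp add: L2_def)

lemma L2_u: "s \<in> Sg \<Longrightarrow> L2 M (u s)"
  unfolding u_def using L2_add[OF L2_th L2_const[of "- \<mu>"]] by simp

lemma L2_e: "n < N \<Longrightarrow> s \<in> yr n \<Longrightarrow> L2 M (\<epsilon> n s)"
  using eps_meas eps_sq by (simp add: L2_def)

lemma mom_u: "s \<in> Sg \<Longrightarrow> (\<integral>\<omega>. u s \<omega> \<partial>M) = 0"
  unfolding u_def using L2_int[OF L2_th] th_mean prob_space by simp

lemma mom_uu: assumes "s \<in> Sg" "t \<in> Sg"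
  shows "(\<integral>\<omega>. u s \<omega> * u t \<omega> \<partial>M) = (if s = t then \<tau>^2 else 0)"
proof (cases "s = t")
  case True then show ?thesis using th_var[OF assms(1)] by (simp add: u_def power2_eq_square)
next
  case False
  have "indep_var borel (\<theta> s) borel (\<theta> t)"
    using indep_vars_pair[OF th_indep assms False] .
  then have "indep_var borel ((\<lambda>x. x - \<mu>) \<circ> \<theta> s) borel ((\<lambda>x. x - \<mu>) \<circ> \<theta> t)"
    by (rule indep_var_compose) auto
  then have "indep_var borel (u s) borel (u t)" by (simp add: u_def[abs_def] comp_def)
  from indep_var_lebesgue_integral[OF this L2_int[OF L2_u] L2_int[OF L2_u]] assms False
  show ?thesis by (simp add: mom_u)
qed

lemma mom_ee: assumes "n < N" "n' < N" "s \<in> yr n" "t \<in> yr n'"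
  shows "(\<integral>\<omega>. \<epsilon> n s \<omega> * \<epsilon> n' t \<omega> \<partial>M) = (if n = n' then \<sigma> s t else 0)"
proof (cases "n = n'")
  case True then show ?thesis using eps_cov assms by simp
next
  case False
  have "indep_var (PiM (yr n) (\<lambda>_. borel)) (\<lambda>\<omega>. restrict (\<lambda>s. \<epsilon> n s \<omega>) (yr n))
                  (PiM (yr n') (\<lambda>_. borel)) (\<lambda>\<omega>. restrict (\<lambda>s. \<epsilon> n' s \<omega>) (yr n'))"
    using indep_vars_pair[OF eps_indep, of n n'] assms False by simp
  then have "indep_var borel ((\<lambda>f. f s) \<circ> (\<lambda>\<omega>. restrict (\<lambda>s. \<epsilon> n s \<omega>) (yr n)))
                       borel ((\<lambda>f. f t) \<circ> (\<lambda>\<omega>. restrict (\<lambda>s. \<epsilon> n' s \<omega>) (yr n')))"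
    by (rule indep_var_compose) (use assms in \<open>auto intro!: measurable_component_singleton\<close>)
  moreover have "(\<lambda>f. f s) \<circ> (\<lambda>\<omega>. restrict (\<lambda>s. \<epsilon> n s \<omega>) (yr n)) = \<epsilon> n s"
     "(\<lambda>f. f t) \<circ> (\<lambda>\<omega>. restrict (\<lambda>s. \<epsilon> n' s \<omega>) (yr n')) = \<epsilon> n' t"
    using assms by (auto simp: fun_eq_iff)
  ultimately have "indep_var borel (\<epsilon> n s) borel (\<epsilon> n' t)" by simp
  from indep_var_lebesgue_integral[OF this L2_int[OF L2_e] L2_int[OF L2_e]] assms False
  show ?thesis by (simp add: eps_mean)
qed

lemma mom_ue: assumes "s \<in> Sg" "n < N" "t \<in> yr n"
  shows "(\<integral>\<omega>. u s \<omega> * \<epsilon> n t \<omega> \<partial>M) = 0"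
proof -
  have "indep_set {\<theta> s -` A \<inter> space M | A. A \<in> sets borel} {\<epsilon> n t -` A \<inter> space M | A. A \<in> sets borel}"
  proof (rule indep_set_mono'[OF th_eps_indep])
    show "{\<theta> s -` A \<inter> space M |A. A \<in> sets borel}
      \<subseteq> {(\<lambda>\<omega>. restrict (\<lambda>s. \<theta> s \<omega>) Sg) -` A \<inter> space M | A. A \<in> sets (PiM Sg (\<lambda>_. (borel :: real measure)))}"
    proof safe
      fix A :: "real set" assume A: "A \<in> sets borel"
      show "\<exists>A'. \<theta> s -` A \<inter> space M = (\<lambda>\<omega>. restrict (\<lambda>s. \<theta> s \<omega>) Sg) -` A' \<inter> space M \<and> A' \<in> sets (PiM Sg (\<lambda>_. (borel :: real measure)))"
      proof (rule exI[of _ "(\<lambda>f. f s) -` A \<inter> space (PiM Sg (\<lambda>_. (borel :: real measure)))"], rule conjI)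
        show "(\<lambda>f. f s) -` A \<inter> space (PiM Sg (\<lambda>_. (borel :: real measure))) \<in> sets (PiM Sg (\<lambda>_. (borel :: real measure)))"
          using assms A by (intro measurable_sets[OF measurable_component_singleton]) auto
      qed (use assms in \<open>auto simp: space_PiM\<close>)
    qed
    show "{\<epsilon> n t -` A \<inter> space M |A. A \<in> sets borel}
      \<subseteq> {(\<lambda>\<omega>. restrict (\<lambda>(n, s). \<epsilon> n s \<omega>) (SIGMA n:{..<N}. yr n)) -` B \<inter> space M
                         | B. B \<in> sets (PiM (SIGMA n:{..<N}. yr n) (\<lambda>_. (borel :: real measure)))}"
    proof safe
      fix A :: "real set" assume A: "A \<in> sets borel"
      show "\<exists>B. \<epsilon> n t -` A \<inter> space M = (\<lambda>\<omega>. restrict (\<lambda>(n, s). \<epsilon> n s \<omega>) (SIGMA n:{..<N}. yr n)) -` B \<inter> space M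
                 \<and> B \<in> sets (PiM (SIGMA n:{..<N}. yr n) (\<lambda>_. (borel :: real measure)))"
      proof (rule exI[of _ "(\<lambda>f. f (n, t)) -` A \<inter> space (PiM (SIGMA n:{..<N}. yr n) (\<lambda>_. (borel :: real measure)))"], rule conjI)
        show "(\<lambda>f. f (n, t)) -` A \<inter> space (PiM (SIGMA n:{..<N}. yr n) (\<lambda>_. (borel :: real measure))) \<in> sets (PiM (SIGMA n:{..<N}. yr n) (\<lambda>_. (borel :: real measure)))"
          using assms A by (intro measurable_sets[OF measurable_component_singleton]) auto
      qed (use assms in \<open>auto simp: space_PiM\<close>)
    qed
  qed
  then have "indep_var borel (\<theta> s) borel (\<epsilon> n t)"
    using assms by (intro indep_var_from_set th_meas eps_meas)
  then have "indep_var borel ((\<lambda>x. x - \<mu>) \<circ> \<theta> s) borel (id \<circ> \<epsilon> n t)"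
    by (rule indep_var_compose) auto
  then have "indep_var borel (u s) borel (\<epsilon> n t)" by (simp add: u_def[abs_def] comp_def)
  from indep_var_lebesgue_integral[OF this L2_int[OF L2_u] L2_int[OF L2_e]] assms
  show ?thesis by (simp add: mom_u)
qed

end




lemma int_sum_prod:
  assumes "finite I" "finite J" "\<And>i. i \<in> I \<Longrightarrow> L2 M (f i)" "\<And>j. j \<in> J \<Longrightarrow> L2 M (g j)"
  shows "(\<integral>\<omega>. (\<Sum>i\<in>I. f i \<omega>) * (\<Sum>j\<in>J. g j \<omega>) \<partial>M) = (\<Sum>i\<in>I. \<Sum>j\<in>J. \<integral>\<omega>. f i \<omega> * g j \<omega> \<partial>M)"
proof -
  have "(\<integral>\<omega>. (\<Sum>i\<in>I. f i \<omega>) * (\<Sum>j\<in>J. g j \<omega>) \<partial>M) = (\<integral>\<omega>. (\<Sum>i\<in>I. \<Sum>j\<in>J. f i \<omega> * g j \<omega>) \<partial>M)"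
    by (simp add: sum_product)
  also have "\<dots> = (\<Sum>i\<in>I. \<integral>\<omega>. (\<Sum>j\<in>J. f i \<omega> * g j \<omega>) \<partial>M)"
    using assms by (intro Bochner_Integration.integral_sum Bochner_Integration.integrable_sum L2_mult_int) auto
  also have "\<dots> = (\<Sum>i\<in>I. \<Sum>j\<in>J. \<integral>\<omega>. f i \<omega> * g j \<omega> \<partial>M)"
    using assms by (intro sum.cong refl Bochner_Integration.integral_sum L2_mult_int) auto
  finally show ?thesis .
qed

lemma int_cmul: fixes f g :: "'w \<Rightarrow> real" shows "(\<integral>\<omega>. (p * f \<omega>) * (q * g \<omega>) \<partial>M) = p * q * (\<integral>\<omega>. f \<omega> * g \<omega> \<partial>M)"
proof -
  have "(\<lambda>\<omega>. (p * f \<omega>) * (q * g \<omega>)) = (\<lambda>\<omega>. (p * q) * (f \<omega> * g \<omega>::real))"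
    by (auto simp: fun_eq_iff mult_ac)
  then show ?thesis by simp
qed

context rsetup begin

definition lin :: "nat set \<Rightarrow> real \<Rightarrow> ('a \<Rightarrow> real) \<Rightarrow> (nat \<Rightarrow> 'a \<Rightarrow> real) \<Rightarrow> 'w \<Rightarrow> real" where
  "lin A c a b \<omega> = c + (\<Sum>s\<in>Sg. a s * u s \<omega>) + (\<Sum>n\<in>A. \<Sum>s\<in>yr n. b n s * \<epsilon> n s \<omega>)"

lemma L2_U: "L2 M (\<lambda>\<omega>. \<Sum>s\<in>Sg. a s * u s \<omega>)"
  by (intro L2_sum L2_scale L2_u)

lemma L2_V0: "n < N \<Longrightarrow> L2 M (\<lambda>\<omega>. \<Sum>s\<in>yr n. b n s * \<epsilon> n s \<omega>)"
  by (intro L2_sum L2_scale L2_e) auto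

lemma L2_V: "A \<subseteq> {..<N} \<Longrightarrow> L2 M (\<lambda>\<omega>. \<Sum>n\<in>A. \<Sum>s\<in>yr n. b n s * \<epsilon> n s \<omega>)"
  by (intro L2_sum L2_V0) auto

lemma L2_lin: "A \<subseteq> {..<N} \<Longrightarrow> L2 M (lin A c a b)"
  unfolding lin_def[abs_def] by (intro L2_add L2_const L2_U L2_V)

lemma finA: "A \<subseteq> {..<N} \<Longrightarrow> finite A"
  using finite_subset by blast

lemma fin_yr: "n < N \<Longrightarrow> finite (yr n)"
  using routes finSg finite_subset by blast

lemma E_UU: "(\<integral>\<omega>. (\<Sum>s\<in>Sg. a s * u s \<omega>) * (\<Sum>s\<in>Sg. a' s * u s \<omega>) \<partial>M) = \<tau>^2 * (\<Sum>s\<in>Sg. a s * a' s)"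
proof -
  have "(\<integral>\<omega>. (\<Sum>s\<in>Sg. a s * u s \<omega>) * (\<Sum>s\<in>Sg. a' s * u s \<omega>) \<partial>M)
     = (\<Sum>s\<in>Sg. \<Sum>t\<in>Sg. \<integral>\<omega>. a s * u s \<omega> * (a' t * u t \<omega>) \<partial>M)"
    using finSg by (intro int_sum_prod L2_scale L2_u) auto
  also have "\<dots> = (\<Sum>s\<in>Sg. \<Sum>t\<in>Sg. (a s * a' t) * (if s = t then \<tau>^2 else 0))"
    by (intro sum.cong refl) (simp add: int_cmul mom_uu)
  also have "\<dots> = \<tau>^2 * (\<Sum>s\<in>Sg. a s * a' s)"
    using finSg by (simp add: sum_distrib_left mult_ac if_distrib sum.delta cong: if_cong)
  finally show ?thesis .
qed

lemma E_U: "(\<integral>\<omega>. (\<Sum>s\<in>Sg. a s * u s \<omega>) \<partial>M) = 0"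
  using finSg L2_int[OF L2_u] by (simp add: mom_u)

lemma E_V: assumes "A \<subseteq> {..<N}" shows "(\<integral>\<omega>. (\<Sum>n\<in>A. \<Sum>s\<in>yr n. b n s * \<epsilon> n s \<omega>) \<partial>M) = 0"
proof -
  have "(\<integral>\<omega>. (\<Sum>n\<in>A. \<Sum>s\<in>yr n. b n s * \<epsilon> n s \<omega>) \<partial>M) = (\<Sum>n\<in>A. \<integral>\<omega>. (\<Sum>s\<in>yr n. b n s * \<epsilon> n s \<omega>) \<partial>M)"
    using assms by (intro Bochner_Integration.integral_sum L2_int L2_V0) auto
  also have "\<dots> = (\<Sum>n\<in>A. \<Sum>s\<in>yr n. b n s * (\<integral>\<omega>. \<epsilon> n s \<omega> \<partial>M))"
    using assms by (intro sum.cong refl) (auto simp: L2_int[OF L2_e])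
  also have "\<dots> = 0" using assms by (auto simp: eps_mean intro!: sum.neutral)
  finally show ?thesis .
qed

lemma E_UV: assumes "A \<subseteq> {..<N}"
  shows "(\<integral>\<omega>. (\<Sum>s\<in>Sg. a s * u s \<omega>) * (\<Sum>n\<in>A. \<Sum>s\<in>yr n. b n s * \<epsilon> n s \<omega>) \<partial>M) = 0"
proof -
  have "(\<integral>\<omega>. (\<Sum>s\<in>Sg. a s * u s \<omega>) * (\<Sum>n\<in>A. \<Sum>s\<in>yr n. b n s * \<epsilon> n s \<omega>) \<partial>M)
     = (\<Sum>s\<in>Sg. \<Sum>n\<in>A. \<integral>\<omega>. a s * u s \<omega> * (\<Sum>t\<in>yr n. b n t * \<epsilon> n t \<omega>) \<partial>M)"
    using finSg finA[OF assms] assms by (intro int_sum_prod L2_scale L2_u L2_V0) auto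
  also have "\<dots> = (\<Sum>s\<in>Sg. \<Sum>n\<in>A. \<Sum>t\<in>yr n. \<integral>\<omega>. a s * u s \<omega> * (b n t * \<epsilon> n t \<omega>) \<partial>M)"
  proof (intro sum.cong refl)
    fix s n assume "s \<in> Sg" "n \<in> A"
    then show "(\<integral>\<omega>. a s * u s \<omega> * (\<Sum>t\<in>yr n. b n t * \<epsilon> n t \<omega>) \<partial>M)
       = (\<Sum>t\<in>yr n. \<integral>\<omega>. a s * u s \<omega> * (b n t * \<epsilon> n t \<omega>) \<partial>M)"
      using int_sum_prod[of "{s}" "yr n" M "\<lambda>s \<omega>. a s * u s \<omega>" "\<lambda>t \<omega>. b n t * \<epsilon> n t \<omega>"]
        fin_yr assms by (auto intro!: L2_scale L2_u L2_e)
  qed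
  also have "\<dots> = 0"
    using assms by (intro sum.neutral ballI) (auto simp: int_cmul mom_ue)
  finally show ?thesis .
qed

lemma E_VU: assumes "A \<subseteq> {..<N}"
  shows "(\<integral>\<omega>. (\<Sum>n\<in>A. \<Sum>s\<in>yr n. b n s * \<epsilon> n s \<omega>) * (\<Sum>s\<in>Sg. a s * u s \<omega>) \<partial>M) = 0"
  using E_UV[OF assms, of a b] by (simp add: mult.commute)

lemma E_VV: assumes "A \<subseteq> {..<N}"
  shows "(\<integral>\<omega>. (\<Sum>n\<in>A. \<Sum>s\<in>yr n. b n s * \<epsilon> n s \<omega>) * (\<Sum>n\<in>A. \<Sum>s\<in>yr n. b' n s * \<epsilon> n s \<omega>) \<partial>M)
       = (\<Sum>n\<in>A. \<Sum>s\<in>yr n. \<Sum>t\<in>yr n. b n s * b' n t * \<sigma> s t)"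
proof -
  have "(\<integral>\<omega>. (\<Sum>n\<in>A. \<Sum>s\<in>yr n. b n s * \<epsilon> n s \<omega>) * (\<Sum>n\<in>A. \<Sum>s\<in>yr n. b' n s * \<epsilon> n s \<omega>) \<partial>M)
     = (\<Sum>n\<in>A. \<Sum>n'\<in>A. \<integral>\<omega>. (\<Sum>s\<in>yr n. b n s * \<epsilon> n s \<omega>) * (\<Sum>t\<in>yr n'. b' n' t * \<epsilon> n' t \<omega>) \<partial>M)"
    using finA[OF assms] assms by (intro int_sum_prod L2_V0) auto
  also have "\<dots> = (\<Sum>n\<in>A. \<Sum>n'\<in>A. if n = n' then (\<Sum>s\<in>yr n. \<Sum>t\<in>yr n. b n s * b' n t * \<sigma> s t) else 0)"
  proof (intro sum.cong refl)
    fix n n' assume nn: "n \<in> A" "n' \<in> A"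
    have "(\<integral>\<omega>. (\<Sum>s\<in>yr n. b n s * \<epsilon> n s \<omega>) * (\<Sum>t\<in>yr n'. b' n' t * \<epsilon> n' t \<omega>) \<partial>M)
       = (\<Sum>s\<in>yr n. \<Sum>t\<in>yr n'. \<integral>\<omega>. b n s * \<epsilon> n s \<omega> * (b' n' t * \<epsilon> n' t \<omega>) \<partial>M)"
      using nn assms fin_yr by (intro int_sum_prod L2_scale L2_e) auto
    also have "\<dots> = (\<Sum>s\<in>yr n. \<Sum>t\<in>yr n'. (b n s * b' n' t) * (if n = n' then \<sigma> s t else 0))"
      using nn assms by (intro sum.cong refl) (auto simp: int_cmul mom_ee[of n n'] subset_eq)
    also have "\<dots> = (if n = n' then (\<Sum>s\<in>yr n. \<Sum>t\<in>yr n. b n s * b' n t * \<sigma> s t) else 0)"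
      by (cases "n = n'") (auto simp: mult_ac)
    finally show "(\<integral>\<omega>. (\<Sum>s\<in>yr n. b n s * \<epsilon> n s \<omega>) * (\<Sum>t\<in>yr n'. b' n' t * \<epsilon> n' t \<omega>) \<partial>M)
       = (if n = n' then (\<Sum>s\<in>yr n. \<Sum>t\<in>yr n. b n s * b' n t * \<sigma> s t) else 0)" .
  qed
  also have "\<dots> = (\<Sum>n\<in>A. \<Sum>s\<in>yr n. \<Sum>t\<in>yr n. b n s * b' n t * \<sigma> s t)"
    using finA[OF assms] by (simp add: sum.delta)
  finally show ?thesis .
qed

lemma E_lin: assumes "A \<subseteq> {..<N}"
  shows "(\<integral>\<omega>. lin A c a b \<omega> * lin A c' a' b' \<omega> \<partial>M)
     = c * c' + \<tau>^2 * (\<Sum>s\<in>Sg. a s * a' s) + (\<Sum>n\<in>A. \<Sum>s\<in>yr n. \<Sum>t\<in>yr n. b n s * b' n t * \<sigma> s t)"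
proof -
  define X where "X = (\<lambda>i::nat. if i = 0 then (\<lambda>_. c) else if i = 1 then (\<lambda>\<omega>. \<Sum>s\<in>Sg. a s * u s \<omega>)
     else (\<lambda>\<omega>. \<Sum>n\<in>A. \<Sum>s\<in>yr n. b n s * \<epsilon> n s \<omega>))"
  define Y where "Y = (\<lambda>i::nat. if i = 0 then (\<lambda>_. c') else if i = 1 then (\<lambda>\<omega>. \<Sum>s\<in>Sg. a' s * u s \<omega>)
     else (\<lambda>\<omega>. \<Sum>n\<in>A. \<Sum>s\<in>yr n. b' n s * \<epsilon> n s \<omega>))"
  have LX: "L2 M (X i)" "L2 M (Y i)" for i
    unfolding X_def Y_def using assms by (auto intro!: L2_const L2_U L2_V)
  have e: "lin A c a b \<omega> * lin A c' a' b' \<omega> = (\<Sum>i\<in>{0,1,2}. X i \<omega>) * (\<Sum>j\<in>{0,1,2}. Y j \<omega>)" for \<omega>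
    by (simp add: X_def Y_def lin_def add.assoc)
  have "(\<integral>\<omega>. lin A c a b \<omega> * lin A c' a' b' \<omega> \<partial>M) = (\<Sum>i\<in>{0,1,2}. \<Sum>j\<in>{0,1,2}. \<integral>\<omega>. X i \<omega> * Y j \<omega> \<partial>M)"
    unfolding e by (intro int_sum_prod LX) auto
  also have "\<dots> = c * c' + \<tau>^2 * (\<Sum>s\<in>Sg. a s * a' s) + (\<Sum>n\<in>A. \<Sum>s\<in>yr n. \<Sum>t\<in>yr n. b n s * b' n t * \<sigma> s t)"
    using assms
    by (simp add: X_def Y_def E_UU E_U E_V E_UV E_VV E_VU prob_space)
  finally show ?thesis .
qed

end



lemma risk_quad:
  assumes "L2 M W" "L2 M Y"
  shows "(\<integral>\<omega>. (p * W \<omega> - Y \<omega>)^2 \<partial>M)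
     = p^2 * (\<integral>\<omega>. W \<omega> * W \<omega> \<partial>M) - 2 * p * (\<integral>\<omega>. W \<omega> * Y \<omega> \<partial>M) + (\<integral>\<omega>. Y \<omega> * Y \<omega> \<partial>M)"
proof -
  have e: "(\<lambda>\<omega>. (p * W \<omega> - Y \<omega>)^2) = (\<lambda>\<omega>. p^2 * (W \<omega> * W \<omega>) - 2 * p * (W \<omega> * Y \<omega>) + Y \<omega> * Y \<omega>)"
    by (auto simp: fun_eq_iff power2_eq_square algebra_simps)
  have i: "integrable M (\<lambda>\<omega>. W \<omega> * W \<omega>)" "integrable M (\<lambda>\<omega>. W \<omega> * Y \<omega>)" "integrable M (\<lambda>\<omega>. Y \<omega> * Y \<omega>)"
    using assms by (auto intro: L2_mult_int)
  show ?thesis unfolding e using i by simp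
qed

lemma swap_count:
  assumes "finite A" "finite S" "\<And>n. n \<in> A \<Longrightarrow> Y n \<subseteq> S"
  shows "(\<Sum>n\<in>A. \<Sum>s\<in>Y n. f s) = (\<Sum>s\<in>S. real (card {n\<in>A. s \<in> Y n}) * (f s :: real))"
proof -
  have "(\<Sum>n\<in>A. \<Sum>s\<in>Y n. f s) = (\<Sum>n\<in>A. \<Sum>s\<in>S. if s \<in> Y n then f s else 0)"
  proof (rule sum.cong[OF refl])
    fix n assume "n \<in> A"
    then have "S \<inter> Y n = Y n" using assms by auto
    then show "sum f (Y n) = (\<Sum>s\<in>S. if s \<in> Y n then f s else 0)"
      using sum.inter_restrict[OF assms(2), of f "Y n"] by simp
  qed
  also have "\<dots> = (\<Sum>s\<in>S. \<Sum>n\<in>A. if s \<in> Y n then f s else 0)" by (rule sum.swap)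
  also have "\<dots> = (\<Sum>s\<in>S. real (card {n\<in>A. s \<in> Y n}) * f s)"
    using assms by (intro sum.cong refl) (simp add: sum.If_cases Int_def)
  finally show ?thesis .
qed

lemma sum_indic:
  assumes "finite S" "y \<subseteq> S"
  shows "(\<Sum>s\<in>S. (if s \<in> y then 1 else 0) * g s) = (\<Sum>s\<in>y. (g s :: real))"
    "(\<Sum>s\<in>S. g s * (if s \<in> y then 1 else 0)) = (\<Sum>s\<in>y. (g s :: real))"
proof -
  have "S \<inter> y = y" using assms by auto
  then have *: "(\<Sum>s\<in>y. g s) = (\<Sum>s\<in>S. if s \<in> y then g s else 0)"
    using sum.inter_restrict[OF assms(1), of g y] by simp
  show "(\<Sum>s\<in>S. (if s \<in> y then 1 else 0) * g s) = (\<Sum>s\<in>y. g s)"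
    unfolding * by (intro sum.cong) auto
  show "(\<Sum>s\<in>S. g s * (if s \<in> y then 1 else 0)) = (\<Sum>s\<in>y. g s)"
    unfolding * by (intro sum.cong) auto
qed

context rsetup begin

lemma psd_eps: assumes "A \<subseteq> {..<N}"
  shows "0 \<le> (\<Sum>n\<in>A. \<Sum>s\<in>yr n. \<Sum>t\<in>yr n. b n s * b n t * \<sigma> s t)"
proof -
  have "0 \<le> (\<integral>\<omega>. lin A 0 (\<lambda>_. 0) b \<omega> * lin A 0 (\<lambda>_. 0) b \<omega> \<partial>M)"
    by (intro integral_nonneg_AE) auto
  then show ?thesis using E_lin[OF assms] by simp
qed

lemma part2:
  assumes dsub: "\<delta> \<subseteq> yr ` {..<N}" and M1: "Mcnt yr N \<delta> \<ge> 1" and ysub: "y \<subseteq> Sg" and tau: "\<tau>^2 > 0"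
  shows "int_risk M (route_est yr N \<theta> \<epsilon> \<mu> \<delta> y (phi_route yr N \<sigma> \<mu> \<tau> \<delta> y)) \<theta> y
       \<le> int_risk M (route_est yr N \<theta> \<epsilon> \<mu> \<delta> y \<phi>) \<theta> y"
proof -
  define A where "A = {n. n < N \<and> yr n \<in> \<delta>}"
  have AN: "A \<subseteq> {..<N}" by (auto simp: A_def)
  have finA': "finite A" using finA[OF AN] .
  define Mr where "Mr = real (Mcnt yr N \<delta>)"
  have Mr: "Mr = real (card A)" by (simp add: Mr_def Mcnt_def A_def)
  have Mpos: "Mr > 0" using M1 by (simp add: Mr_def)
  define Nd where "Nd s = real (Ndelta yr N \<delta> s)" for s
  have Nd: "Nd s = real (card {n\<in>A. s \<in> yr n})" for s
    unfolding Nd_def Ndelta_def A_def by (rule arg_cong[where f="\<lambda>X. real (card X)"]) auto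
  have ysubA: "\<And>n. n \<in> A \<Longrightarrow> yr n \<subseteq> Sg" using routes by (auto simp: A_def)
  have finy: "finite y" using ysub finSg finite_subset by blast
  define c where "c = \<mu> * (ybar yr N \<delta> - real (card y))"
  define W where "W = lin A c (\<lambda>s. Nd s / Mr) (\<lambda>n s. 1 / Mr)"
  define Y where "Y = lin A 0 (\<lambda>s. if s \<in> y then 1 else 0) (\<lambda>n s. 0)"
  have ybarM: "ybar yr N \<delta> * Mr = (\<Sum>n\<in>A. real (card (yr n)))"
    using Mpos by (simp add: ybar_def Mr_def[symmetric] A_def)
  have key: "route_est yr N \<theta> \<epsilon> \<mu> \<delta> y p \<omega> - (\<Sum>s\<in>y. \<theta> s \<omega>) = p * W \<omega> - Y \<omega>" for p \<omega>
  proof -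
    have Yw: "Y \<omega> = (\<Sum>s\<in>y. \<theta> s \<omega>) - real (card y) * \<mu>"
    proof -
      have "Y \<omega> = (\<Sum>s\<in>Sg. (if s \<in> y then 1 else 0) * u s \<omega>)"
        by (simp add: Y_def lin_def)
      also have "\<dots> = (\<Sum>s\<in>y. u s \<omega>)"
        using finSg ysub by (rule sum_indic)
      finally show ?thesis by (simp add: u_def sum_subtractf)
    qed
    have s1: "(\<Sum>n\<in>A. \<Sum>s\<in>yr n. Tobs \<theta> \<epsilon> n s \<omega>)
       = (\<Sum>s\<in>Sg. Nd s * u s \<omega>) + \<mu> * (\<Sum>n\<in>A. real (card (yr n))) + (\<Sum>n\<in>A. \<Sum>s\<in>yr n. \<epsilon> n s \<omega>)"
    proof -
      have "(\<Sum>n\<in>A. \<Sum>s\<in>yr n. Tobs \<theta> \<epsilon> n s \<omega>)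
          = (\<Sum>n\<in>A. \<Sum>s\<in>yr n. u s \<omega>) + (\<Sum>n\<in>A. \<Sum>s\<in>yr n. \<mu>) + (\<Sum>n\<in>A. \<Sum>s\<in>yr n. \<epsilon> n s \<omega>)"
        by (simp add: Tobs_def u_def sum.distrib sum_subtractf)
      also have "(\<Sum>n\<in>A. \<Sum>s\<in>yr n. u s \<omega>) = (\<Sum>s\<in>Sg. Nd s * u s \<omega>)"
        unfolding Nd by (rule swap_count[OF finA' finSg ysubA])
      finally show ?thesis by (simp add: sum_distrib_left mult.commute)
    qed
    have Ww: "W \<omega> = c + (\<Sum>s\<in>Sg. Nd s * u s \<omega>) / Mr + (\<Sum>n\<in>A. \<Sum>s\<in>yr n. \<epsilon> n s \<omega>) / Mr"
      by (simp add: W_def lin_def sum_divide_distrib)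
    show ?thesis
      unfolding route_est_def Mr_def[symmetric] A_def[symmetric] s1 Yw Ww c_def ybarM[symmetric]
      using Mpos by (simp add: field_simps)
  qed
  have LW: "L2 M W" "L2 M Y" unfolding W_def Y_def by (intro L2_lin AN)+
  have risk: "int_risk M (route_est yr N \<theta> \<epsilon> \<mu> \<delta> y p) \<theta> y
      = p^2 * (\<integral>\<omega>. W \<omega> * W \<omega> \<partial>M) - 2 * p * (\<integral>\<omega>. W \<omega> * Y \<omega> \<partial>M) + (\<integral>\<omega>. Y \<omega> * Y \<omega> \<partial>M)" for p
    unfolding int_risk_def key by (rule risk_quad[OF LW])
  define sp where "sp = (\<Sum>n\<in>A. \<Sum>s\<in>yr n. \<Sum>t\<in>yr n. \<sigma> s t)"
  have EWW: "(\<integral>\<omega>. W \<omega> * W \<omega> \<partial>M) = c^2 + \<tau>^2 * (\<Sum>s\<in>Sg. (Nd s)^2) / Mr^2 + sp / Mr^2"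
    unfolding W_def E_lin[OF AN] sp_def
    by (simp add: power2_eq_square sum_divide_distrib[symmetric] sum_distrib_left[symmetric] field_simps)
  have EWY: "(\<integral>\<omega>. W \<omega> * Y \<omega> \<partial>M) = \<tau>^2 * (\<Sum>s\<in>y. Nd s) / Mr"
  proof -
    have "(\<integral>\<omega>. W \<omega> * Y \<omega> \<partial>M) = \<tau>^2 * (\<Sum>s\<in>Sg. Nd s / Mr * (if s \<in> y then 1 else 0))"
      unfolding W_def Y_def E_lin[OF AN] by simp
    also have "\<dots> = \<tau>^2 * (\<Sum>s\<in>y. Nd s / Mr)"
      by (simp only: sum_indic(2)[OF finSg ysub])
    finally show ?thesis by (simp add: sum_divide_distrib[symmetric])
  qed
  have sp0: "0 \<le> sp" unfolding sp_def using psd_eps[OF AN, of "\<lambda>_ _. 1"] by simp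
  obtain n0 where n0: "n0 \<in> A" using Mpos Mr by (metis card.empty equals0I of_nat_0 less_irrefl)
  obtain s0 where s0: "s0 \<in> yr n0" using routes n0 AN by blast
  have s0S: "s0 \<in> Sg" using ysubA n0 s0 by blast
  have "Nd s0 > 0" unfolding Nd using n0 s0 finA' by (auto simp: card_gt_0_iff)
  then have "(\<Sum>s\<in>Sg. (Nd s)^2) > 0"
    using s0S finSg by (intro sum_pos2[of Sg s0]) auto
  then have Qpos: "c^2 + \<tau>^2 * (\<Sum>s\<in>Sg. (Nd s)^2) / Mr^2 + sp / Mr^2 > 0"
    using tau Mpos sp0
    by (smt (verit) divide_nonneg_pos divide_pos_pos mult_pos_pos zero_le_power2 zero_less_power)
  define Q where "Q = c^2 + \<tau>^2 * (\<Sum>s\<in>Sg. (Nd s)^2) / Mr^2 + sp / Mr^2"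
  define L where "L = \<tau>^2 * (\<Sum>s\<in>y. Nd s) / Mr"
  have Sd: "(\<Sum>s\<in>\<Union>\<delta>. (Nd s)^2) = (\<Sum>s\<in>Sg. (Nd s)^2)"
  proof (rule sum.mono_neutral_left[OF finSg])
    show "\<Union>\<delta> \<subseteq> Sg" using dsub routes by auto
    show "\<forall>i\<in>Sg - \<Union>\<delta>. (Nd i)\<^sup>2 = 0"
      unfolding Nd using dsub by (auto simp: A_def)
  qed
  have phi: "phi_route yr N \<sigma> \<mu> \<tau> \<delta> y = L / Q"
  proof -
    have spe: "(\<Sum>n\<in>{n. n < N \<and> yr n \<in> \<delta>}. \<Sum>s\<in>yr n. \<Sum>t\<in>yr n. \<sigma> s t) = sp"
      by (simp add: sp_def A_def)
    have "phi_route yr N \<sigma> \<mu> \<tau> \<delta> y = (\<Sum>s\<in>y. Nd s) * \<tau>^2 /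
      ((\<Sum>s\<in>Sg. (Nd s)^2) / Mr * \<tau>^2 + sp / Mr + Mr * \<mu>^2 * (ybar yr N \<delta> - real (card y))^2)"
      unfolding phi_route_def Let_def Mr_def[symmetric] Nd_def[symmetric] spe Sd[symmetric]
      by (simp add: sum_divide_distrib)
    also have "\<dots> = L / Q"
      unfolding L_def Q_def c_def using Mpos
      by (simp add: field_simps power2_eq_square)
    finally show ?thesis .
  qed
  have Q: "Q > 0" using Qpos Q_def by simp
  have R: "int_risk M (route_est yr N \<theta> \<epsilon> \<mu> \<delta> y p) \<theta> y = Q * p^2 - 2 * L * p + (\<integral>\<omega>. Y \<omega> * Y \<omega> \<partial>M)" for p
    unfolding risk EWW EWY Q_def L_def by (simp add: algebra_simps)
  have "Q * (L/Q)^2 - 2 * L * (L/Q) \<le> Q * \<phi>^2 - 2 * L * \<phi>"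
  proof -
    have "Q * \<phi>^2 - 2 * L * \<phi> - (Q * (L/Q)^2 - 2 * L * (L/Q)) = Q * (\<phi> - L/Q)^2"
      using Q by (simp add: field_simps power2_eq_square)
    moreover have "Q * (\<phi> - L/Q)^2 \<ge> 0" using Q by simp
    ultimately show ?thesis by linarith
  qed
  then show ?thesis unfolding R phi by linarith
qed

end



lemma pd_solve:
  fixes A :: "'i \<Rightarrow> 'i \<Rightarrow> real"
  assumes "finite P" "\<forall>S\<in>P. \<forall>T\<in>P. A S T = A T S"
    "\<forall>x. (\<exists>S\<in>P. x S \<noteq> 0) \<longrightarrow> 0 < (\<Sum>S\<in>P. \<Sum>T\<in>P. x S * A S T * x T)"
  shows "\<exists>x. \<forall>S\<in>P. (\<Sum>T\<in>P. A S T * x T) = b S"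
  using assms
proof (induction P arbitrary: A b rule: finite_induct)
  case empty then show ?case by simp
next
  case (insert a P)
  note fin = insert.hyps(1) and aP = insert.hyps(2)
  note sym = insert.prems(1) and pd = insert.prems(2)
  define \<alpha> where "\<alpha> = A a a"
  have "0 < (\<Sum>S\<in>insert a P. \<Sum>T\<in>insert a P. (\<lambda>S. if S = a then 1 else 0) S * A S T * (\<lambda>S. if S = a then 1 else 0) T)"
    by (rule pd[rule_format]) auto
  also have "\<dots> = \<alpha>"
  proof -
    have z: "\<And>S. S \<in> P \<Longrightarrow> (S = a) = False" using aP by auto
    show ?thesis using fin aP by (simp add: \<alpha>_def sum.insert z cong: sum.cong)
  qed
  finally have apos: "\<alpha> > 0" .
  then have an: "\<alpha> \<noteq> 0" by simp
  define A' where "A' S T = A S T - A S a * A a T / \<alpha>" for S T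
  define b' where "b' S = b S - A S a * b a / \<alpha>" for S
  have symA: "A S T = A T S" if "S \<in> insert a P" "T \<in> insert a P" for S T
    using sym that by blast
  have sym': "\<forall>S\<in>P. \<forall>T\<in>P. A' S T = A' T S"
  proof (intro ballI)
    fix S T assume "S \<in> P" "T \<in> P"
    then have 1: "A S T = A T S" and 2: "A S a = A a S" and 3: "A a T = A T a" using symA by auto
    show "A' S T = A' T S" unfolding A'_def 1 2 3 by (simp add: mult.commute)
  qed
  have pd': "\<forall>x. (\<exists>S\<in>P. x S \<noteq> 0) \<longrightarrow> 0 < (\<Sum>S\<in>P. \<Sum>T\<in>P. x S * A' S T * x T)"
  proof (intro allI impI)
    fix x :: "'i \<Rightarrow> real" assume nz: "\<exists>S\<in>P. x S \<noteq> 0"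
    define r where "r = (\<Sum>T\<in>P. A a T * x T)"
    have r2: "(\<Sum>S\<in>P. x S * A S a) = r"
      unfolding r_def
    proof (rule sum.cong[OF refl])
      fix S assume "S \<in> P"
      then have "A S a = A a S" using symA by auto
      then show "x S * A S a = A a S * x S" by simp
    qed
    define c where "c = - r / \<alpha>"
    define z where "z = x(a := c)"
    have za: "z a = c" by (simp add: z_def)
    have zP: "\<And>S. S \<in> P \<Longrightarrow> z S = x S" using aP by (auto simp: z_def)
    have "0 < (\<Sum>S\<in>insert a P. \<Sum>T\<in>insert a P. z S * A S T * z T)"
      using nz zP aP by (intro pd[rule_format]) (metis insertCI)
    also have "\<dots> = c * \<alpha> * c + c * r + r * c + (\<Sum>S\<in>P. \<Sum>T\<in>P. x S * A S T * x T)"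
    proof -
      have "(\<Sum>S\<in>insert a P. \<Sum>T\<in>insert a P. z S * A S T * z T)
          = (z a * A a a * z a + (\<Sum>T\<in>P. z a * A a T * z T))
            + (\<Sum>S\<in>P. z S * A S a * z a + (\<Sum>T\<in>P. z S * A S T * z T))"
        using fin aP by (simp add: sum.insert)
      also have "(\<Sum>T\<in>P. z a * A a T * z T) = c * r"
        unfolding r_def sum_distrib_left by (rule sum.cong[OF refl]) (simp add: za zP mult.assoc)
      also have "(\<Sum>S\<in>P. z S * A S a * z a + (\<Sum>T\<in>P. z S * A S T * z T))
          = (\<Sum>S\<in>P. x S * A S a) * c + (\<Sum>S\<in>P. \<Sum>T\<in>P. x S * A S T * x T)"
        unfolding sum.distrib sum_distrib_right
        by (intro arg_cong2[where f="(+)"] sum.cong refl) (simp_all add: za zP)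
      finally show ?thesis unfolding r2 za \<alpha>_def by simp
    qed
    also have "\<dots> = (\<Sum>S\<in>P. \<Sum>T\<in>P. x S * A S T * x T) - r * r / \<alpha>"
    proof -
      have "c * \<alpha> * c = r * r / \<alpha>" "c * r = - (r * r / \<alpha>)" "r * c = - (r * r / \<alpha>)" using an
        by (simp_all add: c_def power2_eq_square)
      then show ?thesis by simp
    qed
    also have "\<dots> = (\<Sum>S\<in>P. \<Sum>T\<in>P. x S * A' S T * x T)"
    proof -
      have pt: "x S * A' S T * x T = x S * A S T * x T - (x S * A S a) * (A a T * x T) / \<alpha>" for S T
        by (simp add: A'_def right_diff_distrib left_diff_distrib)
      have "(\<Sum>S\<in>P. \<Sum>T\<in>P. x S * A' S T * x T)
         = (\<Sum>S\<in>P. \<Sum>T\<in>P. x S * A S T * x T) - (\<Sum>S\<in>P. \<Sum>T\<in>P. (x S * A S a) * (A a T * x T) / \<alpha>)"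
        unfolding pt sum_subtractf ..
      also have "(\<Sum>S\<in>P. \<Sum>T\<in>P. (x S * A S a) * (A a T * x T) / \<alpha>) = (\<Sum>S\<in>P. x S * A S a) * (\<Sum>T\<in>P. A a T * x T) / \<alpha>"
        by (simp only: sum_product sum_divide_distrib)
      finally show ?thesis unfolding r2 r_def[symmetric] by simp
    qed
    finally show "0 < (\<Sum>S\<in>P. \<Sum>T\<in>P. x S * A' S T * x T)" .
  qed
  obtain y where y: "\<forall>S\<in>P. (\<Sum>T\<in>P. A' S T * y T) = b' S"
    using insert.IH[OF sym' pd'] by blast
  define ya where "ya = (b a - (\<Sum>T\<in>P. A a T * y T)) / \<alpha>"
  define x where "x = y(a := ya)"
  have xa: "x a = ya" by (simp add: x_def)
  have xP: "\<And>T. T \<in> P \<Longrightarrow> x T = y T" using aP by (auto simp: x_def)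
  have "\<forall>S\<in>insert a P. (\<Sum>T\<in>insert a P. A S T * x T) = b S"
  proof
    fix S assume S: "S \<in> insert a P"
    have e: "(\<Sum>T\<in>insert a P. A S T * x T) = A S a * ya + (\<Sum>T\<in>P. A S T * y T)"
      using fin aP xP xa by (simp add: sum.insert)
    show "(\<Sum>T\<in>insert a P. A S T * x T) = b S"
    proof (cases "S = a")
      case True
      have "A a a * ya = b a - (\<Sum>T\<in>P. A a T * y T)"
        unfolding ya_def \<alpha>_def[symmetric] using an by simp
      then show ?thesis using e True by simp
    next
      case False
      then have SP: "S \<in> P" using S by auto
      have pt: "A' S T * y T = A S T * y T - A S a / \<alpha> * (A a T * y T)" for T
        by (simp add: A'_def left_diff_distrib)
      have "(\<Sum>T\<in>P. A' S T * y T) = (\<Sum>T\<in>P. A S T * y T) - A S a / \<alpha> * (\<Sum>T\<in>P. A a T * y T)"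
        unfolding pt sum_subtractf sum_distrib_left ..
      then have h: "(\<Sum>T\<in>P. A S T * y T) = b S - A S a * b a / \<alpha> + A S a / \<alpha> * (\<Sum>T\<in>P. A a T * y T)"
        using y SP by (simp add: b'_def)
      have "A S a * ya = A S a * b a / \<alpha> - A S a / \<alpha> * (\<Sum>T\<in>P. A a T * y T)"
        unfolding ya_def by (simp add: right_diff_distrib diff_divide_distrib)
      then show ?thesis unfolding e h by simp
    qed
  qed
  then show ?case by blast
qed

lemma quad_opt:
  fixes C :: "'i \<Rightarrow> 'i \<Rightarrow> real" and d :: "'i \<Rightarrow> real"
    and R :: "('i \<Rightarrow> real) \<Rightarrow> real" and sys :: "('i \<Rightarrow> real) \<Rightarrow> bool"
  assumes fin: "finite P" and sym: "\<forall>S\<in>P. \<forall>T\<in>P. C S T = C T S"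
    and psd: "\<forall>x. 0 \<le> (\<Sum>S\<in>P. \<Sum>T\<in>P. x S * x T * C S T)"
    and dpos: "\<forall>S\<in>P. d S > 0"
    and Rdef: "\<And>\<phi>. R \<phi> = (\<Sum>S\<in>P. \<Sum>T\<in>P. \<phi> S * \<phi> T * C S T) + (\<Sum>S\<in>P. (\<phi> S - 1)^2 * d S)"
    and sysdef: "\<And>\<phi>. sys \<phi> \<longleftrightarrow> (\<forall>S\<in>P. (\<Sum>T\<in>P. C S T * \<phi> T) + (\<phi> S - 1) * d S = 0)"
  shows "\<exists>\<phi>s. sys \<phi>s \<and> (\<forall>\<psi>. sys \<psi> \<longrightarrow> (\<forall>S\<in>P. \<psi> S = \<phi>s S))
            \<and> (\<forall>\<phi>. (\<forall>\<phi>'. R \<phi> \<le> R \<phi>') \<longleftrightarrow> (\<forall>S\<in>P. \<phi> S = \<phi>s S))"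
proof -
  define Q where "Q h = (\<Sum>S\<in>P. \<Sum>T\<in>P. h S * h T * C S T) + (\<Sum>S\<in>P. (h S)^2 * d S)" for h :: "'i \<Rightarrow> real"
  define g where "g \<phi> S = (\<Sum>T\<in>P. C S T * \<phi> T) + (\<phi> S - 1) * d S" for \<phi> :: "'i \<Rightarrow> real" and S
  have ident: "R \<psi> = R \<phi> + 2 * (\<Sum>S\<in>P. (\<psi> S - \<phi> S) * g \<phi> S) + Q (\<lambda>S. \<psi> S - \<phi> S)" for \<psi> \<phi>
  proof -
    define h where "h S = \<psi> S - \<phi> S" for S
    have cross: "(\<Sum>S\<in>P. \<Sum>T\<in>P. \<phi> S * h T * C S T) = (\<Sum>S\<in>P. \<Sum>T\<in>P. h S * \<phi> T * C S T)"
    proof -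
      have "(\<Sum>S\<in>P. \<Sum>T\<in>P. \<phi> S * h T * C S T) = (\<Sum>T\<in>P. \<Sum>S\<in>P. \<phi> S * h T * C S T)"
        by (rule sum.swap)
      also have "\<dots> = (\<Sum>T\<in>P. \<Sum>S\<in>P. h T * \<phi> S * C T S)"
      proof (intro sum.cong refl)
        fix T S assume "T \<in> P" "S \<in> P"
        then have "C S T = C T S" using sym by blast
        then show "\<phi> S * h T * C S T = h T * \<phi> S * C T S" by simp
      qed
      finally show ?thesis .
    qed
    have q1: "(\<Sum>S\<in>P. \<Sum>T\<in>P. \<psi> S * \<psi> T * C S T) = (\<Sum>S\<in>P. \<Sum>T\<in>P. \<phi> S * \<phi> T * C S T)
        + 2 * (\<Sum>S\<in>P. \<Sum>T\<in>P. h S * \<phi> T * C S T) + (\<Sum>S\<in>P. \<Sum>T\<in>P. h S * h T * C S T)"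
    proof -
      have "(\<Sum>S\<in>P. \<Sum>T\<in>P. \<psi> S * \<psi> T * C S T) = (\<Sum>S\<in>P. \<Sum>T\<in>P. \<phi> S * \<phi> T * C S T + \<phi> S * h T * C S T
          + h S * \<phi> T * C S T + h S * h T * C S T)"
        by (intro sum.cong refl) (simp add: h_def distrib_left distrib_right right_diff_distrib left_diff_distrib)
      also have "\<dots> = (\<Sum>S\<in>P. \<Sum>T\<in>P. \<phi> S * \<phi> T * C S T) + (\<Sum>S\<in>P. \<Sum>T\<in>P. \<phi> S * h T * C S T)
          + (\<Sum>S\<in>P. \<Sum>T\<in>P. h S * \<phi> T * C S T) + (\<Sum>S\<in>P. \<Sum>T\<in>P. h S * h T * C S T)"
        by (simp add: sum.distrib)
      finally show ?thesis unfolding cross by simp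
    qed
    have q2: "(\<Sum>S\<in>P. (\<psi> S - 1)^2 * d S) = (\<Sum>S\<in>P. (\<phi> S - 1)^2 * d S)
        + 2 * (\<Sum>S\<in>P. h S * ((\<phi> S - 1) * d S)) + (\<Sum>S\<in>P. (h S)^2 * d S)"
    proof -
      have "(\<Sum>S\<in>P. (\<psi> S - 1)^2 * d S) = (\<Sum>S\<in>P. (\<phi> S - 1)^2 * d S + 2 * (h S * ((\<phi> S - 1) * d S)) + (h S)^2 * d S)"
        by (intro sum.cong refl) (simp add: h_def power2_eq_square distrib_left distrib_right right_diff_distrib left_diff_distrib)
      then show ?thesis by (simp add: sum.distrib sum_distrib_left)
    qed
    have q3: "(\<Sum>S\<in>P. h S * g \<phi> S) = (\<Sum>S\<in>P. \<Sum>T\<in>P. h S * \<phi> T * C S T) + (\<Sum>S\<in>P. h S * ((\<phi> S - 1) * d S))"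
    proof -
      have "(\<Sum>S\<in>P. h S * g \<phi> S) = (\<Sum>S\<in>P. (\<Sum>T\<in>P. h S * \<phi> T * C S T) + h S * ((\<phi> S - 1) * d S))"
      proof (rule sum.cong[OF refl])
        fix S assume "S \<in> P"
        have "h S * g \<phi> S = (\<Sum>T\<in>P. h S * (C S T * \<phi> T)) + h S * ((\<phi> S - 1) * d S)"
          by (simp only: g_def distrib_left sum_distrib_left)
        also have "(\<Sum>T\<in>P. h S * (C S T * \<phi> T)) = (\<Sum>T\<in>P. h S * \<phi> T * C S T)"
          by (intro sum.cong refl) (simp add: mult_ac)
        finally show "h S * g \<phi> S = (\<Sum>T\<in>P. h S * \<phi> T * C S T) + h S * ((\<phi> S - 1) * d S)" .
      qed
      then show ?thesis by (simp only: sum.distrib)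
    qed
    show ?thesis unfolding Rdef Q_def h_def[symmetric] q1 q2 q3 by (simp only: distrib_left add_ac)
  qed
  have Qnn: "Q h \<ge> (\<Sum>S\<in>P. (h S)^2 * d S)" for h
    using psd[rule_format, of h] unfolding Q_def by linarith
  have dnn: "(\<Sum>S\<in>P. (h S)^2 * d S) \<ge> 0" for h
    using dpos by (intro sum_nonneg) (simp add: less_imp_le)
  have Q0: "\<forall>S\<in>P. h S = 0" if "Q h \<le> 0" for h
  proof -
    have "(\<Sum>S\<in>P. (h S)^2 * d S) = 0" using Qnn[of h] dnn[of h] that by linarith
    then have "\<forall>S\<in>P. (h S)^2 * d S = 0"
      using fin dpos by (subst (asm) sum_nonneg_eq_0_iff) (auto simp: less_imp_le)
    show ?thesis
    proof
      fix S assume S: "S \<in> P"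
      have "(h S)^2 * d S = 0" using \<open>\<forall>S\<in>P. (h S)^2 * d S = 0\<close> S by blast
      moreover have "d S > 0" using dpos S by blast
      ultimately show "h S = 0" by simp
    qed
  qed
  have Qz: "Q h = 0" if "\<forall>S\<in>P. h S = 0" for h
    using that unfolding Q_def by simp
  have solmin: "R \<psi> = R \<phi> + Q (\<lambda>S. \<psi> S - \<phi> S)" if "sys \<phi>" for \<phi> \<psi>
  proof -
    have "\<forall>S\<in>P. g \<phi> S = 0" using that sysdef g_def by simp
    then show ?thesis using ident[of \<psi> \<phi>] by simp
  qed
  have Qge: "Q h \<ge> 0" for h using Qnn[of h] dnn[of h] by linarith
  define A where "A S T = C S T + (if S = T then d S else 0)" for S T
  have "\<exists>x. \<forall>S\<in>P. (\<Sum>T\<in>P. A S T * x T) = d S"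
  proof (rule pd_solve[OF fin])
    show "\<forall>S\<in>P. \<forall>T\<in>P. A S T = A T S" using sym by (auto simp: A_def)
    show "\<forall>x. (\<exists>S\<in>P. x S \<noteq> 0) \<longrightarrow> 0 < (\<Sum>S\<in>P. \<Sum>T\<in>P. x S * A S T * x T)"
    proof (intro allI impI)
      fix x :: "'i \<Rightarrow> real" assume "\<exists>S\<in>P. x S \<noteq> 0"
      then obtain S0 where S0: "S0 \<in> P" "x S0 \<noteq> 0" by blast
      have row: "(\<Sum>T\<in>P. x S * A S T * x T) = (\<Sum>T\<in>P. x S * x T * C S T) + (x S)^2 * d S" if S: "S \<in> P" for S
      proof -
        have "(\<Sum>T\<in>P. x S * A S T * x T) = (\<Sum>T\<in>P. x S * x T * C S T + (if S = T then x S * d S * x T else 0))"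
          by (intro sum.cong refl) (simp add: A_def algebra_simps)
        also have "\<dots> = (\<Sum>T\<in>P. x S * x T * C S T) + (x S)^2 * d S"
          using fin S by (simp add: sum.distrib power2_eq_square)
        finally show ?thesis .
      qed
      have "(\<Sum>S\<in>P. \<Sum>T\<in>P. x S * A S T * x T) = (\<Sum>S\<in>P. \<Sum>T\<in>P. x S * x T * C S T) + (\<Sum>S\<in>P. (x S)^2 * d S)"
        using row by (simp add: sum.distrib)
      moreover have "(\<Sum>S\<in>P. (x S)^2 * d S) > 0"
        using S0 dpos fin by (intro sum_pos2[of P S0]) (auto simp: less_imp_le)
      ultimately show "0 < (\<Sum>S\<in>P. \<Sum>T\<in>P. x S * A S T * x T)" using psd[rule_format, of x] by linarith
    qed
  qed
  then obtain \<phi>s where phs: "\<forall>S\<in>P. (\<Sum>T\<in>P. A S T * \<phi>s T) = d S" by blast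
  have sys_s: "sys \<phi>s"
    unfolding sysdef
  proof
    fix S assume S: "S \<in> P"
    have "(\<Sum>T\<in>P. A S T * \<phi>s T) = (\<Sum>T\<in>P. C S T * \<phi>s T + (if S = T then d S * \<phi>s T else 0))"
      by (intro sum.cong refl) (simp add: A_def algebra_simps)
    also have "\<dots> = (\<Sum>T\<in>P. C S T * \<phi>s T) + d S * \<phi>s S"
      using fin S by (simp add: sum.distrib)
    finally have "(\<Sum>T\<in>P. A S T * \<phi>s T) = (\<Sum>T\<in>P. C S T * \<phi>s T) + d S * \<phi>s S" .
    then show "(\<Sum>T\<in>P. C S T * \<phi>s T) + (\<phi>s S - 1) * d S = 0" using phs S by (simp add: algebra_simps)
  qed
  have char: "(\<forall>\<phi>'. R \<phi> \<le> R \<phi>') \<longleftrightarrow> (\<forall>S\<in>P. \<phi> S = \<phi>s S)" for \<phi>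
  proof
    assume "\<forall>\<phi>'. R \<phi> \<le> R \<phi>'"
    then have "R \<phi> \<le> R \<phi>s" by blast
    then have "Q (\<lambda>S. \<phi> S - \<phi>s S) \<le> 0" using solmin[OF sys_s, of \<phi>] by simp
    then show "\<forall>S\<in>P. \<phi> S = \<phi>s S" using Q0 by fastforce
  next
    assume h: "\<forall>S\<in>P. \<phi> S = \<phi>s S"
    show "\<forall>\<phi>'. R \<phi> \<le> R \<phi>'"
    proof
      fix \<phi>'
      have "R \<phi> = R \<phi>s" using solmin[OF sys_s, of \<phi>] Qz[of "\<lambda>S. \<phi> S - \<phi>s S"] h by simp
      then show "R \<phi> \<le> R \<phi>'" using solmin[OF sys_s, of \<phi>'] Qge by simp
    qed
  qed
  have uniq: "\<forall>S\<in>P. \<psi> S = \<phi>s S" if "sys \<psi>" for \<psi>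
  proof -
    have "R \<psi> \<le> R \<phi>'" for \<phi>' using solmin[OF that, of \<phi>'] Qge by simp
    then show ?thesis using char by blast
  qed
  show ?thesis using sys_s uniq char by blast
qed




lemma sum_if_sub:
  assumes "finite X" "S \<subseteq> X"
  shows "(\<Sum>s\<in>X. if s \<in> S then f s else 0) = (\<Sum>s\<in>S. (f s :: real))"
proof -
  have "X \<inter> S = S" using assms by auto
  then show ?thesis using sum.inter_restrict[OF assms(1), of f S] by simp
qed

lemma dbl:
  assumes "finite X" "S \<subseteq> X" "T \<subseteq> X"
  shows "(\<Sum>s\<in>X. \<Sum>t\<in>X. (if s \<in> S then a else 0) * (if t \<in> T then b else 0) * f s t)
       = a * b * (\<Sum>s\<in>S. \<Sum>t\<in>T. (f s t :: real))"
proof -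
  have "(\<Sum>s\<in>X. \<Sum>t\<in>X. (if s \<in> S then a else 0) * (if t \<in> T then b else 0) * f s t)
      = (\<Sum>s\<in>X. if s \<in> S then (\<Sum>t\<in>T. a * b * f s t) else 0)"
  proof (rule sum.cong[OF refl])
    fix s assume "s \<in> X"
    show "(\<Sum>t\<in>X. (if s \<in> S then a else 0) * (if t \<in> T then b else 0) * f s t)
        = (if s \<in> S then (\<Sum>t\<in>T. a * b * f s t) else 0)"
    proof (cases "s \<in> S")
      case True
      have "(\<Sum>t\<in>X. (if s \<in> S then a else 0) * (if t \<in> T then b else 0) * f s t)
          = (\<Sum>t\<in>X. if t \<in> T then a * b * f s t else 0)"
        using True by (intro sum.cong) auto
      then show ?thesis using True sum_if_sub[OF assms(1,3)] by simp
    qed simp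
  qed
  also have "\<dots> = (\<Sum>s\<in>S. \<Sum>t\<in>T. a * b * f s t)" by (rule sum_if_sub[OF assms(1,2)])
  finally show ?thesis by (simp add: sum_distrib_left)
qed

context rsetup begin

definition NS :: "'a set \<Rightarrow> real" where "NS S = real (Ncnt yr N S)"
definition CC :: "'a set \<Rightarrow> 'a set \<Rightarrow> real" where
  "CC S T = real (Ncnt yr N (S \<union> T)) / (NS S * NS T) * (\<Sum>s\<in>S. \<Sum>t\<in>T. \<sigma> s t)"
definition bS :: "'a set \<Rightarrow> real \<Rightarrow> nat \<Rightarrow> 'a \<Rightarrow> real" where
  "bS S p n s = (if S \<subseteq> yr n \<and> s \<in> S then p / NS S else 0)"
definition aS :: "'a set \<Rightarrow> real \<Rightarrow> 'a \<Rightarrow> real" where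
  "aS S p s = (if s \<in> S then p else 0)"

lemma VV:
  "(\<Sum>n\<in>{..<N}. \<Sum>s\<in>yr n. \<Sum>t\<in>yr n. bS S p n s * bS T q n t * \<sigma> s t) = p * q * CC S T"
proof -
  define K where "K = p / NS S * (q / NS T) * (\<Sum>s\<in>S. \<Sum>t\<in>T. \<sigma> s t)"
  have "(\<Sum>n\<in>{..<N}. \<Sum>s\<in>yr n. \<Sum>t\<in>yr n. bS S p n s * bS T q n t * \<sigma> s t)
      = (\<Sum>n\<in>{..<N}. if S \<union> T \<subseteq> yr n then K else 0)"
  proof (rule sum.cong[OF refl])
    fix n assume n: "n \<in> {..<N}"
    show "(\<Sum>s\<in>yr n. \<Sum>t\<in>yr n. bS S p n s * bS T q n t * \<sigma> s t) = (if S \<union> T \<subseteq> yr n then K else 0)"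
    proof (cases "S \<union> T \<subseteq> yr n")
      case True
      have "(\<Sum>s\<in>yr n. \<Sum>t\<in>yr n. bS S p n s * bS T q n t * \<sigma> s t)
          = (\<Sum>s\<in>yr n. \<Sum>t\<in>yr n. (if s \<in> S then p / NS S else 0) * (if t \<in> T then q / NS T else 0) * \<sigma> s t)"
        using True by (intro sum.cong refl) (auto simp: bS_def)
      also have "\<dots> = K" unfolding K_def using True n fin_yr by (intro dbl) auto
      finally show ?thesis using True by simp
    next
      case False
      then show ?thesis by (auto simp: bS_def intro!: sum.neutral)
    qed
  qed
  also have "\<dots> = real (Ncnt yr N (S \<union> T)) * K"
    by (simp add: sum.If_cases Ncnt_def Int_def lessThan_def)
  finally show ?thesis unfolding K_def CC_def by (simp add: field_simps)
qed

lemma sigma_sym: "n < N \<Longrightarrow> s \<in> yr n \<Longrightarrow> t \<in> yr n \<Longrightarrow> \<sigma> s t = \<sigma> t s"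
  using eps_cov[of n s t] eps_cov[of n t s] by (simp add: mult.commute)

lemma CC_sym: "CC S T = CC T S"
proof (cases "Ncnt yr N (S \<union> T) = 0")
  case True then show ?thesis by (simp add: CC_def Un_commute)
next
  case False
  then obtain n where n: "n < N" "S \<union> T \<subseteq> yr n"
    unfolding Ncnt_def by (metis (mono_tags, lifting) card.empty empty_Collect_eq)
  have "(\<Sum>s\<in>S. \<Sum>t\<in>T. \<sigma> s t) = (\<Sum>t\<in>T. \<Sum>s\<in>S. \<sigma> t s)"
  proof -
    have "(\<Sum>s\<in>S. \<Sum>t\<in>T. \<sigma> s t) = (\<Sum>t\<in>T. \<Sum>s\<in>S. \<sigma> s t)" by (rule sum.swap)
    also have "\<dots> = (\<Sum>t\<in>T. \<Sum>s\<in>S. \<sigma> t s)"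
    proof (intro sum.cong refl)
      fix t s assume "t \<in> T" "s \<in> S"
      then show "\<sigma> s t = \<sigma> t s" using n sigma_sym[of n s t] by blast
    qed
    finally show ?thesis .
  qed
  then show ?thesis by (simp add: CC_def Un_commute mult.commute)
qed

lemma part1:
  assumes P: "partition_on y P" and NP: "\<forall>S\<in>P. Ncnt yr N S \<ge> 1" and ysub: "y \<subseteq> Sg" and tau: "\<tau>^2 > 0"
  shows "\<exists>\<phi>s. seg_system yr N \<sigma> \<tau> P \<phi>s
           \<and> (\<forall>\<psi>. seg_system yr N \<sigma> \<tau> P \<psi> \<longrightarrow> (\<forall>S\<in>P. \<psi> S = \<phi>s S))
           \<and> (\<forall>\<phi>. (\<forall>\<phi>'. int_risk M (seg_est yr N \<theta> \<epsilon> \<mu> P \<phi>) \<theta> y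
                          \<le> int_risk M (seg_est yr N \<theta> \<epsilon> \<mu> P \<phi>') \<theta> y)
                   \<longleftrightarrow> (\<forall>S\<in>P. \<phi> S = \<phi>s S))"
proof -
  have yU: "y = \<Union>P" using partition_onD1[OF P] .
  have finy: "finite y" using ysub finSg finite_subset by blast
  have finP: "finite P" using finy yU by (metis finite_UnionD)
  have SsubY: "\<And>S. S \<in> P \<Longrightarrow> S \<subseteq> y" using yU by auto
  have SsubSg: "\<And>S. S \<in> P \<Longrightarrow> S \<subseteq> Sg" using SsubY ysub by blast
  have finS: "\<And>S. S \<in> P \<Longrightarrow> finite S" using SsubY finy finite_subset by blast
  have Sne: "\<And>S. S \<in> P \<Longrightarrow> S \<noteq> {}" using partition_onD3[OF P] by auto
  have disj: "\<And>S T. S \<in> P \<Longrightarrow> T \<in> P \<Longrightarrow> S \<noteq> T \<Longrightarrow> S \<inter> T = {}"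
    using disjointD[OF partition_onD2[OF P]] by blast
  have NSpos: "\<And>S. S \<in> P \<Longrightarrow> NS S > 0" using NP by (auto simp: NS_def)
  define Z where "Z \<phi> S = lin {..<N} 0 (aS S (\<phi> S - 1)) (bS S (\<phi> S))" for \<phi> :: "'a set \<Rightarrow> real" and S
  have Zw: "Z \<phi> S \<omega> = (\<phi> S - 1) * (\<Sum>s\<in>S. u s \<omega>)
      + \<phi> S / NS S * (\<Sum>n\<in>{n. n < N \<and> S \<subseteq> yr n}. \<Sum>s\<in>S. \<epsilon> n s \<omega>)" if S: "S \<in> P" for \<phi> S \<omega>
  proof -
    have a: "(\<Sum>s\<in>Sg. aS S (\<phi> S - 1) s * u s \<omega>) = (\<phi> S - 1) * (\<Sum>s\<in>S. u s \<omega>)"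
    proof -
      have "(\<Sum>s\<in>Sg. aS S (\<phi> S - 1) s * u s \<omega>) = (\<Sum>s\<in>Sg. if s \<in> S then (\<phi> S - 1) * u s \<omega> else 0)"
        by (intro sum.cong) (auto simp: aS_def)
      also have "\<dots> = (\<Sum>s\<in>S. (\<phi> S - 1) * u s \<omega>)" using sum_if_sub[OF finSg SsubSg[OF S]] .
      finally show ?thesis by (simp add: sum_distrib_left)
    qed
    have b: "(\<Sum>n\<in>{..<N}. \<Sum>s\<in>yr n. bS S (\<phi> S) n s * \<epsilon> n s \<omega>)
        = \<phi> S / NS S * (\<Sum>n\<in>{n. n < N \<and> S \<subseteq> yr n}. \<Sum>s\<in>S. \<epsilon> n s \<omega>)"
    proof -
      have "(\<Sum>n\<in>{..<N}. \<Sum>s\<in>yr n. bS S (\<phi> S) n s * \<epsilon> n s \<omega>)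
          = (\<Sum>n\<in>{..<N}. if S \<subseteq> yr n then (\<Sum>s\<in>S. \<phi> S / NS S * \<epsilon> n s \<omega>) else 0)"
      proof (rule sum.cong[OF refl])
        fix n assume n: "n \<in> {..<N}"
        show "(\<Sum>s\<in>yr n. bS S (\<phi> S) n s * \<epsilon> n s \<omega>) = (if S \<subseteq> yr n then (\<Sum>s\<in>S. \<phi> S / NS S * \<epsilon> n s \<omega>) else 0)"
        proof (cases "S \<subseteq> yr n")
          case True
          have "(\<Sum>s\<in>yr n. bS S (\<phi> S) n s * \<epsilon> n s \<omega>) = (\<Sum>s\<in>yr n. if s \<in> S then \<phi> S / NS S * \<epsilon> n s \<omega> else 0)"
            using True by (intro sum.cong) (auto simp: bS_def)
          also have "\<dots> = (\<Sum>s\<in>S. \<phi> S / NS S * \<epsilon> n s \<omega>)"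
            using n True fin_yr by (intro sum_if_sub) auto
          finally show ?thesis using True by simp
        qed (auto simp: bS_def intro!: sum.neutral)
      qed
      also have "\<dots> = (\<Sum>n\<in>{n. n < N \<and> S \<subseteq> yr n}. \<Sum>s\<in>S. \<phi> S / NS S * \<epsilon> n s \<omega>)"
        by (simp add: sum.inter_filter[symmetric] lessThan_def)
      finally show ?thesis by (simp add: sum_distrib_left)
    qed
    show ?thesis unfolding Z_def lin_def a b by simp
  qed
  have err: "seg_est yr N \<theta> \<epsilon> \<mu> P \<phi> \<omega> - (\<Sum>s\<in>y. \<theta> s \<omega>) = (\<Sum>S\<in>P. Z \<phi> S \<omega>)" for \<phi> \<omega>
  proof -
    have ysum: "(\<Sum>s\<in>y. \<theta> s \<omega>) = (\<Sum>S\<in>P. \<Sum>s\<in>S. \<theta> s \<omega>)"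
      unfolding yU using finS disj by (subst sum.Union_disjoint) auto
    have blk: "(1 - \<phi> S) * real (card S) * \<mu>
        + \<phi> S * (\<Sum>n\<in>{n. n < N \<and> S \<subseteq> yr n}. \<Sum>s\<in>S. Tobs \<theta> \<epsilon> n s \<omega>) / real (Ncnt yr N S)
        - (\<Sum>s\<in>S. \<theta> s \<omega>) = Z \<phi> S \<omega>" if S: "S \<in> P" for S
    proof -
      have th: "(\<Sum>s\<in>S. \<theta> s \<omega>) = (\<Sum>s\<in>S. u s \<omega>) + real (card S) * \<mu>"
        by (simp add: u_def sum_subtractf)
      have e1: "(\<Sum>n\<in>{n. n < N \<and> S \<subseteq> yr n}. \<Sum>s\<in>S. Tobs \<theta> \<epsilon> n s \<omega>)
          = NS S * (\<Sum>s\<in>S. \<theta> s \<omega>) + (\<Sum>n\<in>{n. n < N \<and> S \<subseteq> yr n}. \<Sum>s\<in>S. \<epsilon> n s \<omega>)"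
        by (simp add: Tobs_def sum.distrib NS_def Ncnt_def)
      show ?thesis unfolding Zw[OF S] NS_def[symmetric] e1 th using NSpos[OF S]
        by (simp add: field_simps)
    qed
    show ?thesis unfolding seg_est_def ysum sum_subtractf[symmetric]
      by (intro sum.cong refl blk)
  qed
  have LZ: "L2 M (Z \<phi> S)" for \<phi> S unfolding Z_def by (intro L2_lin) auto
  have EZZ: "(\<integral>\<omega>. Z \<phi> S \<omega> * Z \<phi> T \<omega> \<partial>M)
      = \<tau>^2 * (if S = T then real (card S) * (\<phi> S - 1) * (\<phi> T - 1) else 0) + \<phi> S * \<phi> T * CC S T"
    if S: "S \<in> P" and T: "T \<in> P" for \<phi> S T
  proof -
    have u: "(\<Sum>s\<in>Sg. aS S (\<phi> S - 1) s * aS T (\<phi> T - 1) s)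
        = (if S = T then real (card S) * (\<phi> S - 1) * (\<phi> T - 1) else 0)"
    proof -
      have "(\<Sum>s\<in>Sg. aS S (\<phi> S - 1) s * aS T (\<phi> T - 1) s) = (\<Sum>s\<in>Sg. if s \<in> S \<inter> T then (\<phi> S - 1) * (\<phi> T - 1) else 0)"
        by (intro sum.cong) (auto simp: aS_def)
      also have "\<dots> = (\<Sum>s\<in>S \<inter> T. (\<phi> S - 1) * (\<phi> T - 1))"
        using SsubSg[OF S] by (intro sum_if_sub finSg) auto
      also have "\<dots> = (if S = T then real (card S) * (\<phi> S - 1) * (\<phi> T - 1) else 0)"
        using disj[OF S T] by auto
      finally show ?thesis .
    qed
    show ?thesis unfolding Z_def E_lin[OF order_refl] u VV by simp
  qed
  define R where "R \<phi> = int_risk M (seg_est yr N \<theta> \<epsilon> \<mu> P \<phi>) \<theta> y" for \<phi>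
  define d where "d S = real (card S) * \<tau>^2" for S :: "'a set"
  have Rf: "R \<phi> = (\<Sum>S\<in>P. \<Sum>T\<in>P. \<phi> S * \<phi> T * CC S T) + (\<Sum>S\<in>P. (\<phi> S - 1)^2 * d S)" for \<phi>
  proof -
    have "R \<phi> = (\<integral>\<omega>. (\<Sum>S\<in>P. Z \<phi> S \<omega>) * (\<Sum>T\<in>P. Z \<phi> T \<omega>) \<partial>M)"
      unfolding R_def int_risk_def err by (simp add: power2_eq_square)
    also have "\<dots> = (\<Sum>S\<in>P. \<Sum>T\<in>P. \<integral>\<omega>. Z \<phi> S \<omega> * Z \<phi> T \<omega> \<partial>M)"
      using finP by (intro int_sum_prod LZ)
    also have "\<dots> = (\<Sum>S\<in>P. \<Sum>T\<in>P. \<phi> S * \<phi> T * CC S T + (if S = T then \<tau>^2 * (real (card S) * (\<phi> S - 1) * (\<phi> T - 1)) else 0))"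
      by (intro sum.cong refl) (simp add: EZZ)
    also have "\<dots> = (\<Sum>S\<in>P. \<Sum>T\<in>P. \<phi> S * \<phi> T * CC S T) + (\<Sum>S\<in>P. (\<phi> S - 1)^2 * d S)"
      using finP by (simp add: sum.distrib d_def power2_eq_square mult_ac)
    finally show ?thesis .
  qed
  have sysf: "seg_system yr N \<sigma> \<tau> P \<phi> \<longleftrightarrow> (\<forall>S\<in>P. (\<Sum>T\<in>P. CC S T * \<phi> T) + (\<phi> S - 1) * d S = 0)" for \<phi>
    unfolding seg_system_def CC_def NS_def d_def by (simp add: mult_ac)
  have psd: "\<forall>x. 0 \<le> (\<Sum>S\<in>P. \<Sum>T\<in>P. x S * x T * CC S T)"
  proof
    fix x :: "'a set \<Rightarrow> real"
    define V where "V S = lin {..<N} 0 (\<lambda>_. 0) (bS S 1)" for S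
    have LV: "L2 M (\<lambda>\<omega>. x S * V S \<omega>)" for S unfolding V_def by (intro L2_scale L2_lin) auto
    have "0 \<le> (\<integral>\<omega>. (\<Sum>S\<in>P. x S * V S \<omega>) * (\<Sum>T\<in>P. x T * V T \<omega>) \<partial>M)"
      by (intro integral_nonneg_AE) auto
    also have "\<dots> = (\<Sum>S\<in>P. \<Sum>T\<in>P. \<integral>\<omega>. (x S * V S \<omega>) * (x T * V T \<omega>) \<partial>M)"
      using finP by (intro int_sum_prod LV)
    also have "\<dots> = (\<Sum>S\<in>P. \<Sum>T\<in>P. x S * x T * CC S T)"
      by (intro sum.cong refl) (simp add: int_cmul V_def E_lin[OF order_refl] VV)
    finally show "0 \<le> (\<Sum>S\<in>P. \<Sum>T\<in>P. x S * x T * CC S T)" .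
  qed
  have dpos: "\<forall>S\<in>P. d S > 0"
    using finS Sne tau by (auto simp: d_def card_gt_0_iff)
  have symC: "\<forall>S\<in>P. \<forall>T\<in>P. CC S T = CC T S" using CC_sym by blast
  from quad_opt[OF finP symC psd dpos Rf sysf]
  show ?thesis unfolding R_def .
qed

end

theorem proposition2p4:
  fixes M :: "'w measure"
    and Sg :: "'a set"
    and N :: nat
    and yr :: "nat \<Rightarrow> 'a set"
    and \<theta> :: "'a \<Rightarrow> 'w \<Rightarrow> real"
    and \<epsilon> :: "nat \<Rightarrow> 'a \<Rightarrow> 'w \<Rightarrow> real"
    and \<mu> \<tau> :: real
    and \<sigma> :: "'a \<Rightarrow> 'a \<Rightarrow> real"
    and y :: "'a set"
  assumes prob: "prob_space M"
    and finSg: "finite Sg"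
    and routes: "\<And>n. n < N \<Longrightarrow> yr n \<noteq> {} \<and> yr n \<subseteq> Sg"
    (* prior: theta_s i.i.d. with mean mu and variance tau^2 > 0 *)
    and th_meas: "\<And>s. s \<in> Sg \<Longrightarrow> \<theta> s \<in> borel_measurable M"
    and th_sq: "\<And>s. s \<in> Sg \<Longrightarrow> integrable M (\<lambda>\<omega>. (\<theta> s \<omega>)^2)"
    and th_indep: "prob_space.indep_vars M (\<lambda>_. (borel :: real measure)) \<theta> Sg"
    and th_ident: "\<And>s t. s \<in> Sg \<Longrightarrow> t \<in> Sg \<Longrightarrow>
                      distr M (borel :: real measure) (\<theta> s) = distr M borel (\<theta> t)"
    and th_mean: "\<And>s. s \<in> Sg \<Longrightarrow> (\<integral>\<omega>. \<theta> s \<omega> \<partial>M) = \<mu>"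
    and th_var: "\<And>s. s \<in> Sg \<Longrightarrow> (\<integral>\<omega>. (\<theta> s \<omega> - \<mu>)^2 \<partial>M) = \<tau>^2"
    and tau_pos: "\<tau>^2 > 0"
    (* errors: mean 0, covariances sigma *)
    and eps_meas: "\<And>n s. n < N \<Longrightarrow> s \<in> yr n \<Longrightarrow> \<epsilon> n s \<in> borel_measurable M"
    and eps_sq: "\<And>n s. n < N \<Longrightarrow> s \<in> yr n \<Longrightarrow> integrable M (\<lambda>\<omega>. (\<epsilon> n s \<omega>)^2)"
    and eps_mean: "\<And>n s. n < N \<Longrightarrow> s \<in> yr n \<Longrightarrow> (\<integral>\<omega>. \<epsilon> n s \<omega> \<partial>M) = 0"
    and eps_cov: "\<And>n s t. n < N \<Longrightarrow> s \<in> yr n \<Longrightarrow> t \<in> yr n \<Longrightarrow>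
                      (\<integral>\<omega>. \<epsilon> n s \<omega> * \<epsilon> n t \<omega> \<partial>M) = \<sigma> s t"
    (* errors from different trips are independent *)
    and eps_indep: "prob_space.indep_vars M (\<lambda>n. PiM (yr n) (\<lambda>_. (borel :: real measure)))
                      (\<lambda>n \<omega>. restrict (\<lambda>s. \<epsilon> n s \<omega>) (yr n)) {..<N}"
    (* prior independent of the errors *)
    and th_eps_indep: "prob_space.indep_set M
                      {(\<lambda>\<omega>. restrict (\<lambda>s. \<theta> s \<omega>) Sg) -` A \<inter> space M
                         | A. A \<in> sets (PiM Sg (\<lambda>_. (borel :: real measure)))}
                      {(\<lambda>\<omega>. restrict (\<lambda>(n, s). \<epsilon> n s \<omega>) (SIGMA n:{..<N}. yr n)) -` B \<inter> space M
                         | B. B \<in> sets (PiM (SIGMA n:{..<N}. yr n) (\<lambda>_. (borel :: real measure)))}"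
    and y_sub: "y \<subseteq> Sg"
  shows
    "(\<forall>P. partition_on y P \<longrightarrow> (\<forall>S\<in>P. Ncnt yr N S \<ge> 1) \<longrightarrow>
        (\<exists>\<phi>s. seg_system yr N \<sigma> \<tau> P \<phi>s
           \<and> (\<forall>\<psi>. seg_system yr N \<sigma> \<tau> P \<psi> \<longrightarrow> (\<forall>S\<in>P. \<psi> S = \<phi>s S))
           \<and> (\<forall>\<phi>. (\<forall>\<phi>'. int_risk M (seg_est yr N \<theta> \<epsilon> \<mu> P \<phi>) \<theta> y
                          \<le> int_risk M (seg_est yr N \<theta> \<epsilon> \<mu> P \<phi>') \<theta> y)
                   \<longleftrightarrow> (\<forall>S\<in>P. \<phi> S = \<phi>s S))))
     \<and>
     (\<forall>\<delta>. \<delta> \<subseteq> yr ` {..<N} \<longrightarrow> Mcnt yr N \<delta> \<ge> 1 \<longrightarrow>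
        (\<forall>\<phi>. int_risk M (route_est yr N \<theta> \<epsilon> \<mu> \<delta> y (phi_route yr N \<sigma> \<mu> \<tau> \<delta> y)) \<theta> y
              \<le> int_risk M (route_est yr N \<theta> \<epsilon> \<mu> \<delta> y \<phi>) \<theta> y))"
  proof -
  interpret rsetup M Sg N yr \<theta> \<epsilon> \<mu> \<tau> \<sigma>
    by (rule rsetup.intro[OF prob rsetup_axioms.intro[OF finSg routes th_meas th_sq th_indep th_mean th_var
      eps_meas eps_sq eps_mean eps_cov eps_indep th_eps_indep]])
  show ?thesis
  proof (intro conjI allI impI)
    fix P assume "partition_on y P" "\<forall>S\<in>P. Ncnt yr N S \<ge> 1"
    then show "\<exists>\<phi>s. seg_system yr N \<sigma> \<tau> P \<phi>s
           \<and> (\<forall>\<psi>. seg_system yr N \<sigma> \<tau> P \<psi> \<longrightarrow> (\<forall>S\<in>P. \<psi> S = \<phi>s S))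
           \<and> (\<forall>\<phi>. (\<forall>\<phi>'. int_risk M (seg_est yr N \<theta> \<epsilon> \<mu> P \<phi>) \<theta> y
                          \<le> int_risk M (seg_est yr N \<theta> \<epsilon> \<mu> P \<phi>') \<theta> y)
                   \<longleftrightarrow> (\<forall>S\<in>P. \<phi> S = \<phi>s S))"
      by (rule part1[OF _ _ y_sub tau_pos])
  next
    fix \<delta> :: "'a set set" and \<phi> :: real
    assume "\<delta> \<subseteq> yr ` {..<N}" "Mcnt yr N \<delta> \<ge> 1"
    then show "int_risk M (route_est yr N \<theta> \<epsilon> \<mu> \<delta> y (phi_route yr N \<sigma> \<mu> \<tau> \<delta> y)) \<theta> y
              \<le> int_risk M (route_est yr N \<theta> \<epsilon> \<mu> \<delta> y \<phi>) \<theta> y"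
      by (rule part2[OF _ _ y_sub tau_pos])
  qed
qed

end
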